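(* Let $L=(l_1,\dots,l_n)$, $n\ge 4$, be a generic length vector satisfying the strict triangle inequality, and let $l_a\ge l_b\ge l_c$ be its three largest entries (for distinct indices $a,b,c$). (1) If $l_b+l_c<|L|/2$ (i.e. the moduli space of $L$ is connected), then any two vertices of $\Gamma(L)$ are connected by a path in $\Gamma(L)$ of length at most $13$. (2) If $l_b+l_c>|L|/2$ (i.e. the moduli space of $L$ is disconnected), then any two vertices of $\Gamma(L)$ lying in the same connected component of $\Gamma(L)$ are connected by a path in $\Gamma(L)$ of length at most $7$.
   Context: Let $n\ge 4$ and $L=(l_1,\dots,l_n)$ be positive reals with $l_i<\sum_{j\ne i}l_j$ for every $i$ (strict triangle inequality), and generic: there is no $J\subseteq[n]$ with $\sum_{i\in J}l_i=\sum_{i\notin J}l_i$. Here $[n]=\{1,\dots,n\}$ and $|L|=\sum_{i=1}^n l_i$. A set $I\subseteq[n]$ is short if $\sum_{i\in I}l_i<|L|/2$ and long otherwise. A cyclically ordered partition of $[n]$ into $k$ parts is a sequence $(A_1,\dots,A_k)$ of pairwise disjoint nonempty sets with union $[n]$, considered up to cyclic shifts $(A_1,\dots,A_k)\sim(A_2,\dots,A_k,A_1)$; there is no ordering inside a part. It is admissible if every part is short. The graph $\Gamma(L)$ has as vertices the admissible cyclically ordered partitions of $[n]$ into 3 parts, written $(I,J,K)$, and as edges the admissible cyclically ordered partitions into 4 parts $(A,B,C,D)$; such an edge is incident to each of the partitions $(A\cup B,C,D)$, $(A,B\cup C,D)$, $(A,B,C\cup D)$, $(D\cup A,B,C)$ that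 is admissible. Equivalently, two vertices are adjacent iff one is obtained from the other by moving a nonempty proper subset of one part into another part. The length of a path is its number of edges. ($\Gamma(L)$ is the 1-skeleton of a cell decomposition of the moduli space of planar configurations of $L$ modulo orientation-preserving isometries.) *)

theory Defs
  imports Complex_Main
begin

text \<open>Length vectors are functions l :: nat => real, only values on {1..n} matter.
  A cyclically ordered partition into k parts is represented by a list of k sets;
  two lists represent the same cyclically ordered partition iff one is a rotation of the other.\<close>

definition total_len :: "(nat \<Rightarrow> real) \<Rightarrow> nat \<Rightarrow> real" where
  "total_len l n = (\<Sum>i\<in>{1..n}. l i)"

definition short :: "(nat \<Rightarrow> real) \<Rightarrow> nat \<Rightarrow> nat set \<Rightarrow> bool" where
  "short l n I \<longleftrightarrow> (\<Sum>i\<in>I. l i) < total_len l n / 2"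

definition length_vector :: "(nat \<Rightarrow> real) \<Rightarrow> nat \<Rightarrow> bool" where
  "length_vector l n \<longleftrightarrow> (\<forall>i\<in>{1..n}. 0 < l i)"

definition strict_triangle :: "(nat \<Rightarrow> real) \<Rightarrow> nat \<Rightarrow> bool" where
  "strict_triangle l n \<longleftrightarrow> (\<forall>i\<in>{1..n}. l i < (\<Sum>j\<in>{1..n} - {i}. l j))"

definition generic :: "(nat \<Rightarrow> real) \<Rightarrow> nat \<Rightarrow> bool" where
  "generic l n \<longleftrightarrow> (\<forall>J. J \<subseteq> {1..n} \<longrightarrow> (\<Sum>i\<in>J. l i) \<noteq> (\<Sum>i\<in>{1..n} - J. l i))"

definition cyc_eq :: "nat set list \<Rightarrow> nat set list \<Rightarrow> bool" where
  "cyc_eq xs ys \<longleftrightarrow> (\<exists>k. ys = rotate k xs)"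

definition ordered_partition :: "nat \<Rightarrow> nat set list \<Rightarrow> bool" where
  "ordered_partition n xs \<longleftrightarrow>
     (\<forall>A\<in>set xs. A \<noteq> {}) \<and>
     (\<forall>i<length xs. \<forall>j<length xs. i \<noteq> j \<longrightarrow> xs ! i \<inter> xs ! j = {}) \<and>
     \<Union>(set xs) = {1..n}"

definition admissible :: "(nat \<Rightarrow> real) \<Rightarrow> nat \<Rightarrow> nat set list \<Rightarrow> bool" where
  "admissible l n xs \<longleftrightarrow> ordered_partition n xs \<and> (\<forall>A\<in>set xs. short l n A)"

definition gvertex :: "(nat \<Rightarrow> real) \<Rightarrow> nat \<Rightarrow> nat set list \<Rightarrow> bool" where
  "gvertex l n xs \<longleftrightarrow> admissible l n xs \<and> length xs = 3"

definition merge4 :: "nat set list \<Rightarrow> nat \<Rightarrow> nat set list" where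
  "merge4 e i = (case i of
      0 \<Rightarrow> [e!0 \<union> e!1, e!2, e!3]
    | Suc 0 \<Rightarrow> [e!0, e!1 \<union> e!2, e!3]
    | Suc (Suc 0) \<Rightarrow> [e!0, e!1, e!2 \<union> e!3]
    | _ \<Rightarrow> [e!3 \<union> e!0, e!1, e!2])"

text \<open>u and v are joined by an edge: an admissible cyclically ordered 4-partition
  incident to both (through two different merges).\<close>
definition gadj :: "(nat \<Rightarrow> real) \<Rightarrow> nat \<Rightarrow> nat set list \<Rightarrow> nat set list \<Rightarrow> bool" where
  "gadj l n u v \<longleftrightarrow> gvertex l n u \<and> gvertex l n v \<and>
     (\<exists>e. admissible l n e \<and> length e = 4 \<and>
        (\<exists>i<4. \<exists>j<4. i \<noteq> j \<and> cyc_eq (merge4 e i) u \<and> cyc_eq (merge4 e j) v))"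

definition path_le :: "(nat \<Rightarrow> real) \<Rightarrow> nat \<Rightarrow> nat \<Rightarrow> nat set list \<Rightarrow> nat set list \<Rightarrow> bool" where
  "path_le l n k u v \<longleftrightarrow>
     (\<exists>ps. ps \<noteq> [] \<and> length ps \<le> k + 1 \<and>
        cyc_eq (ps ! 0) u \<and> cyc_eq (ps ! (length ps - 1)) v \<and>
        (\<forall>i. i + 1 < length ps \<longrightarrow> gadj l n (ps ! i) (ps ! (i + 1))))"

definition same_component :: "(nat \<Rightarrow> real) \<Rightarrow> nat \<Rightarrow> nat set list \<Rightarrow> nat set list \<Rightarrow> bool" where
  "same_component l n u v \<longleftrightarrow> (\<exists>k. path_le l n k u v)"

end

theory Submission
  imports Defs
begin


lemma cyc_eq_refl: "cyc_eq x x"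
  unfolding cyc_eq_def by (rule exI[of _ 0]) simp

lemma cyc_eq_trans: "cyc_eq x y \<Longrightarrow> cyc_eq y z \<Longrightarrow> cyc_eq x z"
  unfolding cyc_eq_def by (auto simp: rotate_rotate)

lemma cyc_eq_sym: assumes "cyc_eq x y" shows "cyc_eq y x"
proof -
  obtain k where y: "y = rotate k x" using assms by (auto simp: cyc_eq_def)
  show ?thesis
  proof (cases "length x = 0")
    case True then show ?thesis using y by (auto simp: cyc_eq_def)
  next
    case False
    define L where "L = length x"
    have lt: "k mod L < L" using False L_def by simp
    have le: "k mod L \<le> k" by (rule mod_less_eq_dividend)
    have e1: "L - k mod L + k = L + (k - k mod L)" using lt le by arith
    have e2: "k - k mod L = L * (k div L)" by (simp add: minus_mod_eq_mult_div)
    have "(L - k mod L + k) mod L = 0" unfolding e1 e2 by simp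
    then have "rotate (L - k mod L) y = x" using y L_def by (simp add: rotate_rotate)
    then show ?thesis unfolding cyc_eq_def by metis
  qed
qed

lemma cyc_eq_rot: "cyc_eq x (rotate k x)"
  unfolding cyc_eq_def by blast

lemma rot3: "rotate k [x,y,z] = [x,y,z] \<or> rotate k [x,y,z] = [y,z,x] \<or> rotate k [x,y,z] = [z,x,y]"
proof (induction k)
  case 0 show ?case by simp
next
  case (Suc k) then show ?case by (elim disjE) simp_all
qed

lemma all3: "(\<forall>i<Suc (Suc (Suc 0)). P (i::nat)) \<longleftrightarrow> P 0 \<and> P (Suc 0) \<and> P (Suc (Suc 0))"
  by (auto simp: less_Suc_eq)
lemma all4: "(\<forall>i<Suc (Suc (Suc (Suc 0))). P (i::nat)) \<longleftrightarrow> P 0 \<and> P (Suc 0) \<and> P (Suc (Suc 0)) \<and> P (Suc (Suc (Suc 0)))"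
  by (auto simp: less_Suc_eq)

lemma gvertex3: "gvertex l n [X,Y,Z] \<longleftrightarrow> X\<noteq>{} \<and> Y\<noteq>{} \<and> Z\<noteq>{} \<and> X\<inter>Y={} \<and> X\<inter>Z={} \<and> Y\<inter>Z={}
   \<and> X\<union>Y\<union>Z={1..n} \<and> short l n X \<and> short l n Y \<and> short l n Z"
  unfolding gvertex_def admissible_def ordered_partition_def
  by (simp add: all3 Int_commute conj_ac Un_assoc)

lemma adm4: "admissible l n [A,B,C,D] \<longleftrightarrow> A\<noteq>{} \<and> B\<noteq>{} \<and> C\<noteq>{} \<and> D\<noteq>{} \<and> A\<inter>B={} \<and> A\<inter>C={} \<and> A\<inter>D={}
   \<and> B\<inter>C={} \<and> B\<inter>D={} \<and> C\<inter>D={}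
   \<and> A\<union>B\<union>C\<union>D={1..n} \<and> short l n A \<and> short l n B \<and> short l n C \<and> short l n D"
  unfolding admissible_def ordered_partition_def
  by (simp add: all4 Int_commute conj_ac Un_assoc)

lemma m4: "merge4 [A,B,C,D] 0 = [A \<union> B, C, D]" "merge4 [A,B,C,D] 1 = [A, B \<union> C, D]"
  "merge4 [A,B,C,D] 2 = [A, B, C \<union> D]" "merge4 [A,B,C,D] 3 = [D \<union> A, B, C]"
  by (simp_all add: merge4_def numeral_eq_Suc)

lemma gvertex_shape: "gvertex l n xs \<Longrightarrow> \<exists>X Y Z. xs = [X,Y,Z]"
  unfolding gvertex_def by (auto simp: length_Suc_conv numeral_eq_Suc)

lemma gvertex_rot: assumes "gvertex l n xs" shows "gvertex l n (rotate k xs)"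
proof -
  obtain X Y Z where xs: "xs = [X,Y,Z]" using gvertex_shape[OF assms] by blast
  have g: "X\<noteq>{} \<and> Y\<noteq>{} \<and> Z\<noteq>{} \<and> X\<inter>Y={} \<and> X\<inter>Z={} \<and> Y\<inter>Z={}
   \<and> X\<union>Y\<union>Z={1..n} \<and> short l n X \<and> short l n Y \<and> short l n Z" using assms xs gvertex3 by metis
  have u1: "Y \<union> Z \<union> X = {1..n}" "Z \<union> X \<union> Y = {1..n}" using g by blast+
  show ?thesis using rot3[of k X Y Z] g u1 unfolding xs
    by (elim disjE) (simp_all only: gvertex3 Int_commute, blast+)
qed

lemma gvertex_cyc: "gvertex l n u \<Longrightarrow> cyc_eq u v \<Longrightarrow> gvertex l n v"
  unfolding cyc_eq_def using gvertex_rot by blast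

lemma gadj_sym: "gadj l n u v \<Longrightarrow> gadj l n v u"
  unfolding gadj_def by blast

lemma gadj_cyc: assumes "gadj l n u v" "cyc_eq u u'" shows "gadj l n u' v"
proof -
  have "gvertex l n u'" using assms gvertex_cyc unfolding gadj_def by blast
  then show ?thesis using assms unfolding gadj_def by (meson cyc_eq_trans)
qed

lemma gadj_cyc2: "gadj l n u v \<Longrightarrow> cyc_eq v v' \<Longrightarrow> gadj l n u v'"
  using gadj_cyc gadj_sym by blast

lemma gadj_rot: "gadj l n u v \<Longrightarrow> gadj l n (rotate i u) (rotate j v)"
  using gadj_cyc gadj_cyc2 cyc_eq_rot by blast

inductive rch :: "(nat \<Rightarrow> real) \<Rightarrow> nat \<Rightarrow> nat \<Rightarrow> nat set list \<Rightarrow> nat set list \<Rightarrow> bool" for l n where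
  r0: "cyc_eq u v \<Longrightarrow> rch l n k u v"
| rs: "rch l n k u w \<Longrightarrow> gadj l n w v \<Longrightarrow> rch l n (Suc k) u v"

lemma rch_mono: "rch l n k u v \<Longrightarrow> k \<le> k' \<Longrightarrow> rch l n k' u v"
proof (induction arbitrary: k' rule: rch.induct)
  case (r0 u v k) then show ?case by (simp add: rch.r0)
next
  case (rs k u w v)
  then obtain k'' where k: "k' = Suc k''" "k \<le> k''" by (cases k') auto
  have "rch l n k'' u w" using rs.IH k(2) .
  then show ?case unfolding k(1) using rs.hyps(2) by (rule rch.rs)
qed

lemma rch_refl: "rch l n k u u" by (rule r0) (rule cyc_eq_refl)

lemma rch_edge: "gadj l n u v \<Longrightarrow> rch l n (Suc 0) u v"
  by (rule rs[OF rch_refl])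

lemma rch_cycr: "rch l n k u v \<Longrightarrow> cyc_eq v v' \<Longrightarrow> rch l n k u v'"
proof (induction rule: rch.induct)
  case (r0 u v k) 
  have "cyc_eq u v'" using cyc_eq_trans r0 by blast
  then show ?case by (rule rch.r0)
next
  case (rs k u w v) 
  have "gadj l n w v'" using gadj_cyc2 rs by blast
  with rs.hyps(1) show ?case by (rule rch.rs)
qed

lemma rch_trans: "rch l n k2 w v \<Longrightarrow> rch l n k1 u w \<Longrightarrow> rch l n (k1+k2) u v"
proof (induction rule: rch.induct)
  case (r0 w v k) 
  have "rch l n k1 u v" using rch_cycr r0 by blast
  then show ?case by (rule rch_mono) simp
next
  case (rs k w x v) 
  have "rch l n (k1 + k) u x" using rs.IH rs.prems .
  then have "rch l n (Suc (k1 + k)) u v" using rs.hyps(2) by (rule rch.rs)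
  then show ?case by simp
qed

lemma rch_cons: "gadj l n u w \<Longrightarrow> rch l n k w v \<Longrightarrow> rch l n (Suc k) u v"
proof -
  assume g: "gadj l n u w" and r: "rch l n k w v"
  have "rch l n (Suc 0 + k) u v" using rch_trans[OF r rch_edge[OF g]] .
  then show ?thesis by simp
qed

lemma rch_sym: "rch l n k u v \<Longrightarrow> rch l n k v u"
proof (induction rule: rch.induct)
  case (r0 u v k) 
  have "cyc_eq v u" using cyc_eq_sym r0 by blast
  then show ?case by (rule rch.r0)
next
  case (rs k u w v) 
  have "gadj l n v w" using gadj_sym rs.hyps(2) by blast
  then show ?case using rs.IH by (rule rch_cons)
qed

lemma rch_cycl: "rch l n k u v \<Longrightarrow> cyc_eq u u' \<Longrightarrow> rch l n k u' v"
  using rch_sym rch_cycr by blast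

lemma rch_path: "rch l n k u v \<Longrightarrow> path_le l n k u v"
proof (induction rule: rch.induct)
  case (r0 u v k)
  show ?case unfolding path_le_def
    by (rule exI[of _ "[u]"]) (simp add: cyc_eq_refl r0)
next
  case (rs k u w v)
  then obtain ps where ps: "ps \<noteq> []" "length ps \<le> k + 1" "cyc_eq (ps ! 0) u"
    "cyc_eq (ps ! (length ps - 1)) w" "\<forall>i. i + 1 < length ps \<longrightarrow> gadj l n (ps ! i) (ps ! (i + 1))"
    unfolding path_le_def by blast
  have g: "gadj l n (ps ! (length ps - 1)) v" using rs(2) ps(4) gadj_cyc cyc_eq_sym by blast
  show ?case unfolding path_le_def
  proof (rule exI[of _ "ps @ [v]"], intro conjI allI impI)
    show "ps @ [v] \<noteq> []" by simp
    show "length (ps @ [v]) \<le> Suc k + 1" using ps by simp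
    show "cyc_eq ((ps @ [v]) ! 0) u" using ps by (simp add: nth_append)
    show "cyc_eq ((ps @ [v]) ! (length (ps @ [v]) - 1)) v" by (simp add: cyc_eq_refl)
    fix i assume i: "i + 1 < length (ps @ [v])"
    show "gadj l n ((ps @ [v]) ! i) ((ps @ [v]) ! (i + 1))"
    proof (cases "i + 1 < length ps")
      case True then show ?thesis using ps(5) by (simp add: nth_append)
    next
      case False then have "i = length ps - 1" using i by simp
      then show ?thesis using g ps(1) by (simp add: nth_append)
    qed
  qed
qed



locale L9 =
  fixes l :: "nat \<Rightarrow> real" and n a b c :: nat
  assumes n4: "n \<ge> 4"
    and lv: "length_vector l n" and st: "strict_triangle l n" and gen: "generic l n"
    and ain: "a \<in> {1..n}" and bin: "b \<in> {1..n}" and cin: "c \<in> {1..n}"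
    and ab: "a \<noteq> b" and ac: "a \<noteq> c" and bc: "b \<noteq> c"
    and lab: "l a \<ge> l b" and lbc: "l b \<ge> l c"
    and lrest: "\<forall>i\<in>{1..n} - {a, b, c}. l i \<le> l c"
begin

abbreviation "tot \<equiv> total_len l n"
abbreviation "h \<equiv> total_len l n / 2"

lemma tot_def': "tot = sum l {1..n}" by (simp add: total_len_def)

lemma pos: "i \<in> {1..n} \<Longrightarrow> 0 < l i"
  using lv unfolding length_vector_def by blast

lemma short_iff: "short l n X \<longleftrightarrow> sum l X < h"
  unfolding short_def by simp

lemma fin: "X \<subseteq> {1..n} \<Longrightarrow> finite X"
  using finite_subset by blast
lemma fin': "X \<subseteq> {Suc 0..n} \<Longrightarrow> finite X"
  using finite_subset by blast

lemma sum_nonneg': "X \<subseteq> {1..n} \<Longrightarrow> 0 \<le> sum l X"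
proof -
  assume "X \<subseteq> {1..n}"
  then have "\<And>x. x\<in>X \<Longrightarrow> 0 \<le> l x" using pos less_imp_le by blast
  then show ?thesis by (rule sum_nonneg)
qed

lemma sum_mono': "X \<subseteq> Y \<Longrightarrow> Y \<subseteq> {1..n} \<Longrightarrow> sum l X \<le> sum l Y"
proof -
  assume a1: "X \<subseteq> Y" and a2: "Y \<subseteq> {1..n}"
  have nn: "\<And>x. x\<in>Y - X \<Longrightarrow> 0 \<le> l x" using pos a2 less_imp_le by blast
  have "finite Y" using a2 by (rule fin)
  then show ?thesis using a1 nn by (rule sum_mono2)
qed

lemma sum_pos': "X \<subseteq> {1..n} \<Longrightarrow> X \<noteq> {} \<Longrightarrow> 0 < sum l X"
proof -
  assume a1: "X \<subseteq> {1..n}" and a2: "X \<noteq> {}"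
  have nn: "\<And>x. x\<in>X \<Longrightarrow> 0 < l x" using pos a1 by blast
  have "finite X" using a1 by (rule fin)
  then show ?thesis using a2 nn by (rule sum_pos)
qed

lemma short_mono: "X \<subseteq> Y \<Longrightarrow> Y \<subseteq> {1..n} \<Longrightarrow> short l n Y \<Longrightarrow> short l n X"
proof -
  assume "X \<subseteq> Y" "Y \<subseteq> {1..n}" "short l n Y"
  then have "sum l X \<le> sum l Y" "sum l Y < h" using sum_mono' short_iff by auto
  then show ?thesis unfolding short_iff by linarith
qed

lemma sum_compl: "J \<subseteq> {1..n} \<Longrightarrow> sum l ({1..n} - J) = tot - sum l J"
  unfolding tot_def' by (rule sum_diff) auto

lemma sum_diff': "X \<subseteq> Y \<Longrightarrow> Y \<subseteq> {1..n} \<Longrightarrow> sum l (Y - X) = sum l Y - sum l X"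
  by (rule sum_diff) (auto intro: fin fin')

lemma sum_un: "X \<subseteq> {1..n} \<Longrightarrow> Y \<subseteq> {1..n} \<Longrightarrow> X \<inter> Y = {} \<Longrightarrow> sum l (X \<union> Y) = sum l X + sum l Y"
  by (rule sum.union_disjoint) (auto intro: fin fin')

lemma gen_ne: "J \<subseteq> {1..n} \<Longrightarrow> sum l J \<noteq> h"
proof
  assume J: "J \<subseteq> {1..n}" and e: "sum l J = h"
  have "sum l ({1..n} - J) = tot - sum l J" using sum_compl J .
  then have "sum l J = sum l ({1..n} - J)" using e by simp
  then show False using gen J unfolding generic_def by blast
qed

lemma single_short: "i \<in> {1..n} \<Longrightarrow> l i < h"
proof -
  assume i: "i \<in> {1..n}"
  have "l i < sum l ({1..n} - {i})" using st i unfolding strict_triangle_def by blast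
  also have "\<dots> = tot - l i" using sum_compl[of "{i}"] i by simp
  finally show ?thesis by simp
qed

lemma le_a: "i \<in> {1..n} \<Longrightarrow> l i \<le> l a"
proof -
  assume i: "i \<in> {1..n}"
  show ?thesis
  proof (cases "i \<in> {a,b,c}")
    case True then show ?thesis using lab lbc by auto
  next
    case False then have "l i \<le> l c" using lrest i by blast
    then show ?thesis using lab lbc by linarith
  qed
qed

lemma h_pos: "l a < h" using single_short ain .

lemma gv3D: assumes "gvertex l n [X,Y,Z]"
  shows "X\<noteq>{}" "Y\<noteq>{}" "Z\<noteq>{}" "X\<inter>Y={}" "X\<inter>Z={}" "Y\<inter>Z={}"
   "X\<union>Y\<union>Z={1..n}" "short l n X" "short l n Y" "short l n Z"
  using assms unfolding gvertex3 by simp_all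

lemma gv3I: assumes "X\<noteq>{}" "Y\<noteq>{}" "Z\<noteq>{}" "X\<inter>Y={}" "X\<inter>Z={}" "Y\<inter>Z={}"
   "X\<union>Y\<union>Z={1..n}" "short l n X" "short l n Y" "short l n Z"
  shows "gvertex l n [X,Y,Z]"
  using assms unfolding gvertex3 by simp

lemma stepN:
  assumes g1: "gvertex l n [X,Y,Z]" and g2: "gvertex l n [X',Y',Z]" and s1: "X' \<subset> X" and s2: "Y \<subset> Y'"
  shows "gadj l n [X,Y,Z] [X',Y',Z]"
proof -
  note A = gv3D[OF g1] and B = gv3D[OF g2]
  define S where "S = X - X'"
  have Sne: "S \<noteq> {}" using s1 S_def by blast
  have Ssub: "S \<subseteq> X" using S_def by blast
  have YS: "S \<union> Y = Y'"
  proof -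
    have "Y' \<subseteq> {1..n}" using B(7) by blast
    then have "Y' \<subseteq> X \<union> Y \<union> Z" using A(7) by simp
    moreover have "X' \<union> S = X" using s1 S_def by blast
    moreover have "S \<subseteq> Y'"
    proof
      fix x assume x: "x \<in> S"
      then have "x \<in> X" "x \<notin> X'" using S_def by auto
      then have "x \<notin> Z" using A(5) by blast
      have "x \<in> {1..n}" using A(7) \<open>x \<in> X\<close> by blast
      then show "x \<in> Y'" using B(7) \<open>x \<notin> X'\<close> \<open>x \<notin> Z\<close> by blast
    qed
    ultimately show ?thesis using s2 B(4) B(6) by blast
  qed
  have XS: "X' \<union> S = X" using s1 S_def by blast
  have X1: "X \<subseteq> {1..n}" using A(7) by blast
  have shS: "short l n S" using short_mono[OF Ssub X1] A(8) by blast
  have adm: "admissible l n [X', S, Y, Z]"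
    unfolding adm4
  proof (intro conjI)
    show "X' \<noteq> {}" "S \<noteq> {}" "Y \<noteq> {}" "Z \<noteq> {}" using A B Sne by simp_all
    show "X' \<inter> S = {}" using S_def by blast
    show "X' \<inter> Y = {}" using s1 A(4) by blast
    show "X' \<inter> Z = {}" using B(5) .
    show "S \<inter> Y = {}" using Ssub A(4) by blast
    show "S \<inter> Z = {}" using Ssub A(5) by blast
    show "Y \<inter> Z = {}" using A(6) .
    show "X' \<union> S \<union> Y \<union> Z = {1..n}" using XS A(7) by blast
    show "short l n X'" "short l n S" "short l n Y" "short l n Z" using A B shS by simp_all
  qed
  show ?thesis unfolding gadj_def
  proof (intro conjI)
    show "gvertex l n [X,Y,Z]" by fact
    show "gvertex l n [X',Y',Z]" by fact
    show "\<exists>e. admissible l n e \<and> length e = 4 \<and>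
      (\<exists>i<4. \<exists>j<4. i \<noteq> j \<and> cyc_eq (merge4 e i) [X, Y, Z] \<and> cyc_eq (merge4 e j) [X', Y', Z])"
    proof (intro exI conjI)
      show "admissible l n [X', S, Y, Z]" by fact
      show "length [X', S, Y, Z] = 4" by simp
      show "(0::nat) < 4" "(1::nat) < 4" "(0::nat) \<noteq> 1" by simp_all
      show "cyc_eq (merge4 [X', S, Y, Z] 0) [X, Y, Z]" unfolding m4 XS by (rule cyc_eq_refl)
      show "cyc_eq (merge4 [X', S, Y, Z] 1) [X', Y', Z]" unfolding m4 YS by (rule cyc_eq_refl)
    qed
  qed
qed

lemma stepP:
  assumes g1: "gvertex l n [X,Y,Z]" and g2: "gvertex l n [X',Y,Z']" and s1: "X' \<subset> X" and s2: "Z \<subset> Z'"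
  shows "gadj l n [X,Y,Z] [X',Y,Z']"
proof -
  note A = gv3D[OF g1] and B = gv3D[OF g2]
  define S where "S = X - X'"
  have Sne: "S \<noteq> {}" using s1 S_def by blast
  have Ssub: "S \<subseteq> X" using S_def by blast
  have ZS: "Z \<union> S = Z'"
  proof -
    have "Z' \<subseteq> {1..n}" using B(7) by blast
    then have "Z' \<subseteq> X \<union> Y \<union> Z" using A(7) by simp
    moreover have "X' \<union> S = X" using s1 S_def by blast
    moreover have "S \<subseteq> Z'"
    proof
      fix x assume x: "x \<in> S"
      then have "x \<in> X" "x \<notin> X'" using S_def by auto
      then have "x \<notin> Y" using A(4) by blast
      have "x \<in> {1..n}" using A(7) \<open>x \<in> X\<close> by blast
      then show "x \<in> Z'" using B(7) \<open>x \<notin> X'\<close> \<open>x \<notin> Y\<close> by blast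
    qed
    ultimately show ?thesis using s2 B(5) B(6) by blast
  qed
  have XS: "S \<union> X' = X" using s1 S_def by blast
  have X1: "X \<subseteq> {1..n}" using A(7) by blast
  have shS: "short l n S" using short_mono[OF Ssub X1] A(8) by blast
  have adm: "admissible l n [S, X', Y, Z]"
    unfolding adm4
  proof (intro conjI)
    show "S \<noteq> {}" "X' \<noteq> {}" "Y \<noteq> {}" "Z \<noteq> {}" using A B Sne by simp_all
    show "S \<inter> X' = {}" using S_def by blast
    show "X' \<inter> Y = {}" using s1 A(4) by blast
    show "X' \<inter> Z = {}" using s1 A(5) by blast
    show "S \<inter> Y = {}" using Ssub A(4) by blast
    show "S \<inter> Z = {}" using Ssub A(5) by blast
    show "Y \<inter> Z = {}" using A(6) .
    show "S \<union> X' \<union> Y \<union> Z = {1..n}" using XS A(7) by blast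
    show "short l n S" "short l n X'" "short l n Y" "short l n Z" using A B shS by simp_all
  qed
  have rr: "rotate 1 [Z', X', Y] = [X', Y, Z']" by simp
  show ?thesis unfolding gadj_def
  proof (intro conjI)
    show "gvertex l n [X,Y,Z]" by fact
    show "gvertex l n [X',Y,Z']" by fact
    show "\<exists>e. admissible l n e \<and> length e = 4 \<and>
      (\<exists>i<4. \<exists>j<4. i \<noteq> j \<and> cyc_eq (merge4 e i) [X, Y, Z] \<and> cyc_eq (merge4 e j) [X', Y, Z'])"
    proof (intro exI conjI)
      show "admissible l n [S, X', Y, Z]" by fact
      show "length [S, X', Y, Z] = 4" by simp
      show "(0::nat) < 4" "(3::nat) < 4" "(0::nat) \<noteq> 3" by simp_all
      show "cyc_eq (merge4 [S, X', Y, Z] 0) [X, Y, Z]" unfolding m4 XS by (rule cyc_eq_refl)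
      have "cyc_eq [Z \<union> S, X', Y] (rotate 1 [Z \<union> S, X', Y])" by (rule cyc_eq_rot)
      then show "cyc_eq (merge4 [S, X', Y, Z] 3) [X', Y, Z']" unfolding m4 ZS rr .
    qed
  qed
qed

end


lemma greedy:
  fixes f :: "nat \<Rightarrow> real"
  assumes "finite F" "base < t"
  shows "\<exists>G\<subseteq>F. base + sum f G < t \<and> (G = F \<or> (\<exists>y\<in>F - G. t \<le> base + sum f G + f y))"
  using assms(1)
proof (induction F rule: finite_induct)
  case empty then show ?case using assms(2) by auto
next
  case (insert x F)
  then obtain G0 where G0: "G0 \<subseteq> F" "base + sum f G0 < t" "G0 = F \<or> (\<exists>y\<in>F - G0. t \<le> base + sum f G0 + f y)"
    by blast
  show ?case
  proof (cases "G0 = F")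
    case True
    show ?thesis
    proof (cases "base + sum f F + f x < t")
      case True2: True
      have "sum f (insert x F) = f x + sum f F" using insert.hyps by simp
      then show ?thesis using True2 by (intro exI[of _ "insert x F"]) auto
    next
      case False
      then have "t \<le> base + sum f F + f x" by linarith
      moreover have "x \<in> insert x F - F" using insert.hyps by blast
      ultimately have "\<exists>y\<in>insert x F - F. t \<le> base + sum f F + f y" by blast
      then show ?thesis using True G0 by (intro exI[of _ F]) auto
    qed
  next
    case False
    then obtain y where "y \<in> F - G0" "t \<le> base + sum f G0 + f y" using G0 by blast
    then show ?thesis using G0 by (intro exI[of _ G0]) auto
  qed
qed

context L9 begin

definition Ra where "Ra = {1..n} - {a}"
definition V where "V X = [{a}, X, Ra - X]"
definition inW where "inW X \<longleftrightarrow> X \<subseteq> Ra \<and> h - l a < sum l X \<and> sum l X < h"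

lemma Ra_sub: "Ra \<subseteq> {1..n}" unfolding Ra_def by blast
lemma a_notin_Ra: "a \<notin> Ra" unfolding Ra_def by blast

lemma sum_Ra: "sum l Ra = tot - l a"
  using sum_compl[of "{a}"] ain unfolding Ra_def by simp

lemma sum_Ra_diff: "X \<subseteq> Ra \<Longrightarrow> sum l (Ra - X) = tot - l a - sum l X"
  using sum_diff'[of X Ra] Ra_sub sum_Ra by simp

lemma sum_insa: "X \<subseteq> Ra \<Longrightarrow> sum l (insert a X) = l a + sum l X"
proof -
  assume X: "X \<subseteq> Ra"
  have "finite X" using X Ra_sub fin by blast
  moreover have "a \<notin> X" using X a_notin_Ra by blast
  ultimately show ?thesis by simp
qed

lemma gen_lo: "X \<subseteq> Ra \<Longrightarrow> sum l X \<noteq> h - l a"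
proof
  assume X: "X \<subseteq> Ra" and e: "sum l X = h - l a"
  have "insert a X \<subseteq> {1..n}" using X Ra_sub ain by blast
  then have "sum l (insert a X) \<noteq> h" by (rule gen_ne)
  then show False using sum_insa[OF X] e by simp
qed

lemma part_sum: assumes "gvertex l n [X,Y,Z]" shows "sum l X + sum l Y + sum l Z = tot"
proof -
  note A = gv3D[OF assms]
  have s: "X \<subseteq> {1..n}" "Y \<subseteq> {1..n}" "Z \<subseteq> {1..n}" using A(7) by blast+
  have "sum l (X \<union> Y) = sum l X + sum l Y" using sum_un s A(4) by blast
  moreover have "sum l (X \<union> Y \<union> Z) = sum l (X \<union> Y) + sum l Z"
    using sum_un[of "X \<union> Y" Z] s A(5) A(6) by blast
  ultimately show ?thesis using A(7) tot_def' by simp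
qed

lemma inW_gv: assumes "inW X" shows "gvertex l n (V X)"
proof -
  have X: "X \<subseteq> Ra" "h - l a < sum l X" "sum l X < h" using assms unfolding inW_def by auto
  have Xn: "X \<subseteq> {1..n}" using X(1) Ra_sub by blast
  have sc: "sum l (Ra - X) = tot - l a - sum l X" using sum_Ra_diff[OF X(1)] .
  have lo: "0 < h - l a" using h_pos by simp
  show ?thesis unfolding V_def
  proof (rule gv3I)
    show "{a} \<noteq> {}" by simp
    show "X \<noteq> {}" using X(2) lo by auto
    show "Ra - X \<noteq> {}"
    proof
      assume e: "Ra - X = {}"
      have "sum l (Ra - X) = 0" unfolding e by simp
      then show False using sc X(3) lo by simp
    qed
    show "{a} \<inter> X = {}" "{a} \<inter> (Ra - X) = {}" "X \<inter> (Ra - X) = {}" using X(1) a_notin_Ra by auto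
    show "{a} \<union> X \<union> (Ra - X) = {1..n}" using X(1) ain unfolding Ra_def by auto
    show "short l n {a}" unfolding short_iff using h_pos by simp
    show "short l n X" unfolding short_iff using X(3) .
    show "short l n (Ra - X)" unfolding short_iff using sc X(2) by simp
  qed
qed

lemma gv_inW: assumes "gvertex l n [{a}, X, Z]" shows "inW X" "Z = Ra - X"
proof -
  note A = gv3D[OF assms]
  have X: "X \<subseteq> Ra" using A(4) A(7) unfolding Ra_def by blast
  show "Z = Ra - X" using A(5) A(6) A(7) unfolding Ra_def by blast
  then have "sum l Z = tot - l a - sum l X" using sum_Ra_diff[OF X] by simp
  then show "inW X" unfolding inW_def using X A(9) A(10) unfolding short_iff by auto
qed

lemma inW_compl: "inW X \<Longrightarrow> inW (Ra - X)"
proof -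
  assume w: "inW X"
  then have X: "X \<subseteq> Ra" "h - l a < sum l X" "sum l X < h" unfolding inW_def by auto
  have "sum l (Ra - X) = tot - l a - sum l X" using sum_Ra_diff[OF X(1)] .
  then show ?thesis unfolding inW_def using X by auto
qed

lemma Ra_cc: "X \<subseteq> Ra \<Longrightarrow> Ra - (Ra - X) = X" by blast

lemma gadj_unrot: "gadj l n (rotate i u) (rotate j v) \<Longrightarrow> gadj l n u v"
proof -
  assume g: "gadj l n (rotate i u) (rotate j v)"
  have "cyc_eq (rotate i u) u" "cyc_eq (rotate j v) v" using cyc_eq_rot cyc_eq_sym by blast+
  then show ?thesis using g gadj_cyc gadj_cyc2 by blast
qed

lemma nest: assumes "inW X" "inW Y" "X \<subseteq> Y" shows "rch l n (Suc 0) (V X) (V Y)"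
proof (cases "X = Y")
  case True then show ?thesis by (simp add: rch_refl)
next
  case False
  have XY: "X \<subset> Y" using False assms(3) by blast
  have Y: "Y \<subseteq> Ra" using assms(2) unfolding inW_def by blast
  have r1: "rotate 2 (V X) = [Ra - X, {a}, X]" "rotate 2 (V Y) = [Ra - Y, {a}, Y]"
    unfolding V_def by (simp_all add: numeral_eq_Suc)
  have g1: "gvertex l n [Ra - X, {a}, X]" using gvertex_rot[OF inW_gv[OF assms(1)], of 2] r1 by simp
  have g2: "gvertex l n [Ra - Y, {a}, Y]" using gvertex_rot[OF inW_gv[OF assms(2)], of 2] r1 by simp
  have "Ra - Y \<subset> Ra - X" using XY Y by blast
  then have "gadj l n [Ra - X, {a}, X] [Ra - Y, {a}, Y]" using stepP[OF g1 g2] XY by blast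
  then have "gadj l n (V X) (V Y)" using gadj_unrot[of 2 "V X" 2 "V Y"] r1 by simp
  then show ?thesis by (rule rch_edge)
qed

lemma nest': "inW X \<Longrightarrow> inW Y \<Longrightarrow> Y \<subseteq> X \<Longrightarrow> rch l n (Suc 0) (V X) (V Y)"
  using nest rch_sym by blast

end


context L9 begin

lemma iso: assumes g: "gvertex l n [A,B,C]" and aA: "a \<in> A"
  shows "\<exists>X. inW X \<and> rch l n 2 [A,B,C] (V X)"
proof -
  note G = gv3D[OF g]
  have sub: "A \<subseteq> {1..n}" "B \<subseteq> {1..n}" "C \<subseteq> {1..n}" using G(7) by blast+
  have ps: "sum l A + sum l B + sum l C = tot" using part_sum[OF g] .
  define A' where "A' = A - {a}"
  have A'R: "A' \<subseteq> Ra" using sub(1) unfolding A'_def Ra_def by blast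
  have AA: "A = insert a A'" using aA unfolding A'_def by blast
  have sA: "sum l A = l a + sum l A'" using sum_insa[OF A'R] AA by simp
  have shB: "sum l B < h" using G(9) short_iff by blast
  have finA': "finite A'" using A'R Ra_sub fin by blast
  obtain Gs where Gs: "Gs \<subseteq> A'" "sum l B + sum l Gs < h"
    "Gs = A' \<or> (\<exists>y\<in>A' - Gs. h \<le> sum l B + sum l Gs + l y)"
    using greedy[OF finA' shB, of l] by blast
  have aB: "a \<notin> B" "a \<notin> C" using aA G(4) G(5) by blast+
  have A'B: "A' \<inter> B = {}" "A' \<inter> C = {}" using G(4) G(5) unfolding A'_def by blast+
  have sBG: "sum l (B \<union> Gs) = sum l B + sum l Gs"
    using sum_un[of B Gs] sub(2) A'R Ra_sub Gs(1) A'B by blast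
  show ?thesis
  proof (cases "Gs = A'")
    case True
    show ?thesis
    proof (cases "A' = {}")
      case True
      then have "A = {a}" using AA by simp
      then have g': "gvertex l n [{a}, B, C]" using g by simp
      have "inW B" "C = Ra - B" using gv_inW[OF g'] by auto
      then show ?thesis using \<open>A = {a}\<close> unfolding V_def by (intro exI[of _ B]) (simp add: rch_refl)
    next
      case False
      have gw: "gvertex l n [{a}, B \<union> A', C]"
      proof (rule gv3I)
        show "{a} \<noteq> {}" "B \<union> A' \<noteq> {}" "C \<noteq> {}" using G(3) False by auto
        show "{a} \<inter> (B \<union> A') = {}" "{a} \<inter> C = {}" "(B \<union> A') \<inter> C = {}"
          using aB A'B G(6) unfolding A'_def by auto
        show "{a} \<union> (B \<union> A') \<union> C = {1..n}" using G(7) AA by auto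
        show "short l n {a}" unfolding short_iff using h_pos by simp
        show "short l n (B \<union> A')" unfolding short_iff using sBG Gs(2) \<open>Gs = A'\<close> by simp
        show "short l n C" using G(10) .
      qed
      have "gadj l n [A,B,C] [{a}, B \<union> A', C]"
        using stepN[OF g gw] False AA A'B aB unfolding A'_def by blast
      then have r: "rch l n (Suc 0) [A,B,C] [{a}, B \<union> A', C]" by (rule rch_edge)
      have "inW (B \<union> A')" "C = Ra - (B \<union> A')" using gv_inW[OF gw] by auto
      then show ?thesis using r unfolding V_def by (intro exI[of _ "B \<union> A'"]) (auto intro: rch_mono)
    qed
  next
    case False
    then obtain y where y: "y \<in> A' - Gs" "h \<le> sum l B + sum l Gs + l y" using Gs(3) by blast
    have yn: "y \<in> {1..n}" using y(1) A'R Ra_sub by blast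
    have ya: "l y \<le> l a" using le_a[OF yn] .
    have gw1: "gvertex l n [A - Gs, B \<union> Gs, C]"
    proof (rule gv3I)
      show "A - Gs \<noteq> {}" "B \<union> Gs \<noteq> {}" "C \<noteq> {}" using G(2) G(3) aA Gs(1) unfolding A'_def by auto
      show "(A - Gs) \<inter> (B \<union> Gs) = {}" "(A - Gs) \<inter> C = {}" "(B \<union> Gs) \<inter> C = {}"
        using G(4) G(5) G(6) A'B Gs(1) by auto
      show "(A - Gs) \<union> (B \<union> Gs) \<union> C = {1..n}" using G(7) Gs(1) unfolding A'_def by auto
      show "short l n (A - Gs)" using short_mono[of "A - Gs" A] sub(1) G(8) by blast
      show "short l n (B \<union> Gs)" unfolding short_iff using sBG Gs(2) by simp
      show "short l n C" using G(10) .
    qed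
    have r1: "rch l n (Suc 0) [A,B,C] [A - Gs, B \<union> Gs, C]"
    proof (cases "Gs = {}")
      case True then show ?thesis by (simp add: rch_refl)
    next
      case False
      have "A - Gs \<subset> A" "B \<subset> B \<union> Gs" using False Gs(1) A'B unfolding A'_def by auto
      then show ?thesis using stepN[OF g gw1] rch_edge by blast
    qed
    have sdiff: "sum l (A' - Gs) = sum l A' - sum l Gs" using sum_diff'[OF Gs(1)] A'R Ra_sub by blast
    have sCu: "sum l (C \<union> (A' - Gs)) = sum l C + sum l (A' - Gs)"
      using sum_un[of C "A' - Gs"] sub(3) A'R Ra_sub A'B by blast
    have Cn: "C \<union> (A' - Gs) \<subseteq> {1..n}" using sub(3) A'R Ra_sub by blast
    have le: "sum l (C \<union> (A' - Gs)) \<le> h" using sCu sdiff ps sA y(2) ya by linarith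
    have ne: "sum l (C \<union> (A' - Gs)) \<noteq> h" using gen_ne[OF Cn] .
    have gw2: "gvertex l n [{a}, B \<union> Gs, C \<union> (A' - Gs)]"
    proof (rule gv3I)
      show "{a} \<noteq> {}" "B \<union> Gs \<noteq> {}" "C \<union> (A' - Gs) \<noteq> {}" using G(2) G(3) by auto
      show "{a} \<inter> (B \<union> Gs) = {}" "{a} \<inter> (C \<union> (A' - Gs)) = {}" "(B \<union> Gs) \<inter> (C \<union> (A' - Gs)) = {}"
        using aB A'B G(6) Gs(1) unfolding A'_def by auto
      show "{a} \<union> (B \<union> Gs) \<union> (C \<union> (A' - Gs)) = {1..n}" using G(7) AA Gs(1) by auto
      show "short l n {a}" unfolding short_iff using h_pos by simp
      show "short l n (B \<union> Gs)" unfolding short_iff using sBG Gs(2) by simp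
      show "short l n (C \<union> (A' - Gs))" unfolding short_iff using le ne by simp
    qed
    have "{a} \<subset> A - Gs" "C \<subset> C \<union> (A' - Gs)" using y(1) aA A'B Gs(1) unfolding A'_def by auto
    then have "gadj l n [A - Gs, B \<union> Gs, C] [{a}, B \<union> Gs, C \<union> (A' - Gs)]" using stepP[OF gw1 gw2] by blast
    then have r2: "rch l n (Suc 0 + Suc 0) [A,B,C] [{a}, B \<union> Gs, C \<union> (A' - Gs)]"
      using rch_trans[OF rch_edge r1] by blast
    have "inW (B \<union> Gs)" "C \<union> (A' - Gs) = Ra - (B \<union> Gs)" using gv_inW[OF gw2] by auto
    then show ?thesis using r2 unfolding V_def by (intro exI[of _ "B \<union> Gs"]) (simp add: numeral_2_eq_2)
  qed
qed

lemma iso_any: assumes g: "gvertex l n u" shows "\<exists>X. inW X \<and> rch l n 2 u (V X)"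
proof -
  obtain U0 U1 U2 where u: "u = [U0,U1,U2]" using gvertex_shape[OF g] by blast
  have G: "U0 \<union> U1 \<union> U2 = {1..n}" using gv3D(7) g u by blast
  have "a \<in> U0 \<or> a \<in> U1 \<or> a \<in> U2" using G ain by blast
  moreover
  { assume "a \<in> U0" then have ?thesis using iso g u by blast }
  moreover
  { assume aU: "a \<in> U1"
    have r: "rotate 1 u = [U1,U2,U0]" using u by simp
    have "gvertex l n [U1,U2,U0]" using gvertex_rot[OF g, of 1] r by simp
    then obtain X where X: "inW X" "rch l n 2 [U1,U2,U0] (V X)" using iso aU by blast
    have "cyc_eq [U1,U2,U0] u" using cyc_eq_sym[OF cyc_eq_rot[of u 1]] r by simp
    then have ?thesis using X rch_cycl by blast }
  moreover
  { assume aU: "a \<in> U2"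
    have r: "rotate 2 u = [U2,U0,U1]" using u by (simp add: numeral_eq_Suc)
    have "gvertex l n [U2,U0,U1]" using gvertex_rot[OF g, of 2] r by simp
    then obtain X where X: "inW X" "rch l n 2 [U2,U0,U1] (V X)" using iso aU by blast
    have "cyc_eq [U2,U0,U1] u" using cyc_eq_sym[OF cyc_eq_rot[of u 2]] r by simp
    then have ?thesis using X rch_cycl by blast }
  ultimately show ?thesis by blast
qed

end


context L9 begin

lemma walk:
  assumes w: "inW X" and X12: "X1 \<union> X2 = X" "X1 \<inter> X2 = {}" "X1 \<noteq> {}" "X2 \<noteq> {}"
    and s1: "l a + sum l X1 < h" and s2: "l a + sum l X2 < h"
  shows "rch l n 3 (V X) (V (Ra - X))"
proof -
  define Y where "Y = Ra - X"
  have XR: "X \<subseteq> Ra" using w unfolding inW_def by blast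
  have g0: "gvertex l n [{a}, X, Y]" using inW_gv[OF w] unfolding V_def Y_def .
  note G = gv3D[OF g0]
  have X1R: "X1 \<subseteq> Ra" "X2 \<subseteq> Ra" using XR X12(1) by blast+
  have sh1: "short l n ({a} \<union> X1)" "short l n ({a} \<union> X2)"
    unfolding short_iff using sum_insa[OF X1R(1)] sum_insa[OF X1R(2)] s1 s2 by simp_all
  have Xn: "X \<subseteq> {1..n}" using XR Ra_sub by blast
  have sh2: "short l n X1" "short l n X2"
    using short_mono[of X1 X, OF _ Xn G(9)] short_mono[of X2 X, OF _ Xn G(9)] X12(1) by blast+
  have g1: "gvertex l n [{a} \<union> X1, X2, Y]"
  proof (rule gv3I)
    show "{a} \<union> X1 \<noteq> {}" "X2 \<noteq> {}" "Y \<noteq> {}" using X12 G(3) by auto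
    show "({a} \<union> X1) \<inter> X2 = {}" "({a} \<union> X1) \<inter> Y = {}" "X2 \<inter> Y = {}"
      using X12 X1R a_notin_Ra unfolding Y_def by auto
    show "({a} \<union> X1) \<union> X2 \<union> Y = {1..n}" using G(7) X12(1) by auto
    show "short l n ({a} \<union> X1)" "short l n X2" "short l n Y" using sh1 sh2 G(10) by auto
  qed
  have g2: "gvertex l n [X1, {a} \<union> X2, Y]"
  proof (rule gv3I)
    show "X1 \<noteq> {}" "{a} \<union> X2 \<noteq> {}" "Y \<noteq> {}" using X12 G(3) by auto
    show "X1 \<inter> ({a} \<union> X2) = {}" "X1 \<inter> Y = {}" "({a} \<union> X2) \<inter> Y = {}"
      using X12 X1R a_notin_Ra unfolding Y_def by auto
    show "X1 \<union> ({a} \<union> X2) \<union> Y = {1..n}" using G(7) X12(1) by auto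
    show "short l n X1" "short l n ({a} \<union> X2)" "short l n Y" using sh1 sh2 G(10) by auto
  qed
  have Ya: "Ra - Y = X" using XR unfolding Y_def by blast
  have g3: "gvertex l n [{a}, Y, X]" using inW_gv[OF inW_compl[OF w]] Ya unfolding V_def Y_def by simp
  have ga: "gvertex l n [X, Y, {a}]" using gvertex_rot[OF g0, of 1] by simp
  have gb: "gvertex l n [X2, Y, {a} \<union> X1]" using gvertex_rot[OF g1, of 1] by simp
  have "X2 \<subset> X" "{a} \<subset> {a} \<union> X1" using X12 a_notin_Ra X1R by auto
  then have "gadj l n [X, Y, {a}] [X2, Y, {a} \<union> X1]" using stepP[OF ga gb] by blast
  then have e1: "gadj l n [{a}, X, Y] [{a} \<union> X1, X2, Y]"
    using gadj_unrot[of 1 "[{a}, X, Y]" 1 "[{a} \<union> X1, X2, Y]"] by simp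
  have "X1 \<subset> {a} \<union> X1" "X2 \<subset> {a} \<union> X2" using X1R a_notin_Ra by auto
  then have e2: "gadj l n [{a} \<union> X1, X2, Y] [X1, {a} \<union> X2, Y]" using stepN[OF g1 g2] by blast
  have gc: "gvertex l n [{a} \<union> X2, Y, X1]" using gvertex_rot[OF g2, of 1] by simp
  have "{a} \<subset> {a} \<union> X2" "X1 \<subset> X" using X12 a_notin_Ra X1R by auto
  then have "gadj l n [{a} \<union> X2, Y, X1] [{a}, Y, X]" using stepP[OF gc g3] by blast
  then have e3: "gadj l n [X1, {a} \<union> X2, Y] [{a}, Y, X]"
    using gadj_unrot[of 1 "[X1, {a} \<union> X2, Y]" 0 "[{a}, Y, X]"] by simp
  have "rch l n (Suc (Suc (Suc 0))) [{a}, X, Y] [{a}, Y, X]"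
    using rch_cons[OF e1 rch_cons[OF e2 rch_cons[OF e3 rch_refl]]] .
  then show ?thesis unfolding V_def Y_def[symmetric] Ya by (simp add: numeral_eq_Suc)
qed

lemma swap1:
  assumes w: "inW X" and small: "\<forall>x\<in>X. l x < h - l a"
  shows "rch l n 5 (V X) (V (Ra - X))"
proof -
  have XR: "X \<subseteq> Ra" and lo: "h - l a < sum l X" "sum l X < h" using w unfolding inW_def by auto
  have finX: "finite X" using XR Ra_sub fin by blast
  have z: "(0::real) < h - l a" using h_pos by simp
  obtain G where G: "G \<subseteq> X" "0 + sum l G < h - l a" "G = X \<or> (\<exists>y\<in>X - G. h - l a \<le> 0 + sum l G + l y)"
    using greedy[OF finX z, of l] by blast
  have "G \<noteq> X" using G(2) lo by auto
  then obtain y where y: "y \<in> X - G" "h - l a \<le> sum l G + l y" using G(3) by auto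
  have Gne: "G \<noteq> {}"
  proof
    assume "G = {}" then have "h - l a \<le> l y" using y by simp
    then show False using small y(1) by force
  qed
  define X' where "X' = insert y G"
  have X'R: "X' \<subseteq> Ra" using XR G(1) y(1) unfolding X'_def by blast
  have finG: "finite G" using finX G(1) finite_subset by blast
  have sX': "sum l X' = l y + sum l G" using y(1) finG unfolding X'_def by simp
  have "sum l X' \<noteq> h - l a" using gen_lo[OF X'R] .
  moreover have "sum l X' \<le> sum l X" using sum_mono'[of X' X] XR Ra_sub G(1) y(1) unfolding X'_def by blast
  ultimately have wX': "inW X'" unfolding inW_def using X'R sX' y(2) lo by auto
  have "y \<notin> G" using y by blast
  have r1: "rch l n (Suc 0) (V X) (V X')" using nest'[OF w wX'] G(1) y(1) unfolding X'_def by blast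
  have sy: "l y < h - l a" using small y(1) by blast
  have r2: "rch l n 3 (V X') (V (Ra - X'))"
    using walk[OF wX', of G "{y}"] Gne G(2) sy \<open>y \<notin> G\<close> unfolding X'_def by auto
  have r3: "rch l n (Suc 0) (V (Ra - X')) (V (Ra - X))"
    using nest'[OF inW_compl[OF wX'] inW_compl[OF w]] G(1) y(1) unfolding X'_def by blast
  have "rch l n (Suc 0 + 3 + Suc 0) (V X) (V (Ra - X))"
    using rch_trans[OF r3 rch_trans[OF r2 r1]] .
  then show ?thesis by simp
qed

lemma le_b: "y \<in> {1..n} \<Longrightarrow> y \<noteq> a \<Longrightarrow> l y \<le> l b"
proof -
  assume y: "y \<in> {1..n}" "y \<noteq> a"
  show ?thesis
  proof (cases "y \<in> {a,b,c}")
    case True then show ?thesis using y lbc by auto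
  next
    case False then have "l y \<le> l c" using lrest y by blast
    then show ?thesis using lbc by linarith
  qed
qed

lemma le_c: "y \<in> {1..n} \<Longrightarrow> y \<noteq> a \<Longrightarrow> y \<noteq> b \<Longrightarrow> l y \<le> l c"
  using lrest by (cases "y = c") auto

lemma pair_le: "x \<in> Ra \<Longrightarrow> y \<in> Ra \<Longrightarrow> x \<noteq> y \<Longrightarrow> l x + l y \<le> l b + l c"
proof -
  assume x: "x \<in> Ra" and y: "y \<in> Ra" and xy: "x \<noteq> y"
  have xn: "x \<in> {1..n}" "x \<noteq> a" and yn: "y \<in> {1..n}" "y \<noteq> a" using x y unfolding Ra_def by auto
  show ?thesis
  proof (cases "x = b")
    case True
    then have "l y \<le> l c" using le_c[OF yn] xy by blast
    then show ?thesis using True by simp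
  next
    case False
    then have "l x \<le> l c" using le_c[OF xn] by blast
    moreover have "l y \<le> l b" using le_b[OF yn] .
    ultimately show ?thesis by linarith
  qed
qed

lemma swap:
  assumes conn: "l b + l c < h" and w: "inW X"
  shows "rch l n 5 (V X) (V (Ra - X))"
proof -
  have XR: "X \<subseteq> Ra" using w unfolding inW_def by blast
  have wY: "inW (Ra - X)" using inW_compl[OF w] .
  show ?thesis
  proof (cases "\<forall>x\<in>X. l x < h - l a")
    case True then show ?thesis using swap1[OF w] by blast
  next
    case F1: False
    show ?thesis
    proof (cases "\<forall>y\<in>Ra - X. l y < h - l a")
      case True
      have "rch l n 5 (V (Ra - X)) (V (Ra - (Ra - X)))" using swap1[OF wY True] .
      then show ?thesis using Ra_cc[OF XR] rch_sym by simp
    next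
      case F2: False
      obtain x where x: "x \<in> X" "h - l a \<le> l x" using F1 by force
      obtain y where y: "y \<in> Ra - X" "h - l a \<le> l y" using F2 by force
      have xR: "x \<in> Ra" "y \<in> Ra" using x y XR by auto
      have xy: "x \<noteq> y" using x y by blast
      have xn: "x \<in> {1..n}" "y \<in> {1..n}" using xR Ra_sub by auto
      have nx: "sum l {x} \<noteq> h - l a" "sum l {y} \<noteq> h - l a" using gen_lo[of "{x}"] gen_lo[of "{y}"] xR by auto
      have wx: "inW {x}" unfolding inW_def using xR x(2) nx single_short[OF xn(1)] by auto
      have wy: "inW {y}" unfolding inW_def using xR y(2) nx single_short[OF xn(2)] by auto
      have pl: "l x + l y \<le> l b + l c" using pair_le[OF xR xy] .
      have spair: "sum l {x, y} = l x + l y" using xy by simp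
      have pos2: "0 < l y" using pos xn by blast
      have wxy: "inW {x, y}" unfolding inW_def using xR spair pl conn x(2) pos2 by auto
      have r1: "rch l n (Suc 0) (V X) (V {x})" using nest'[OF w wx] x(1) by blast
      have r2: "rch l n (Suc 0) (V {x}) (V {x,y})" using nest[OF wx wxy] by blast
      have r3: "rch l n (Suc 0) (V {x,y}) (V {y})" using nest'[OF wxy wy] by blast
      have r4: "rch l n (Suc 0) (V {y}) (V (Ra - X))" using nest[OF wy wY] y(1) by blast
      have "rch l n (Suc 0 + Suc 0 + Suc 0 + Suc 0) (V X) (V (Ra - X))"
        using rch_trans[OF r4 rch_trans[OF r3 rch_trans[OF r2 r1]]] .
      then show ?thesis by (rule rch_mono) simp
    qed
  qed
qed

end


context L9 begin

lemma dist:
  assumes conn: "l b + l c < h" and wX: "inW X" and wY: "inW Y"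
  shows "rch l n 7 (V X) (V Y)"
proof -
  have XR: "X \<subseteq> Ra" "h - l a < sum l X" "sum l X < h" using wX unfolding inW_def by auto
  have YR: "Y \<subseteq> Ra" "h - l a < sum l Y" "sum l Y < h" using wY unfolding inW_def by auto
  define P where "P = X \<inter> Y"
  define Q where "Q = X - Y"
  define S where "S = Y - X"
  define U where "U = Ra - (X \<union> Y)"
  have PR: "P \<subseteq> Ra" "Q \<subseteq> Ra" "S \<subseteq> Ra" "U \<subseteq> Ra" using XR YR unfolding P_def Q_def S_def U_def by auto
  have Rn: "Ra \<subseteq> {1..n}" by (rule Ra_sub)
  have sX: "sum l X = sum l P + sum l Q"
  proof -
    have e: "X = P \<union> Q" "P \<inter> Q = {}" unfolding P_def Q_def by auto
    have "sum l (P \<union> Q) = sum l P + sum l Q" using sum_un[OF _ _ e(2)] PR(1,2) Rn by blast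
    then show ?thesis using e(1) by simp
  qed
  show ?thesis
  proof (cases "h - l a < sum l P")
    case True
    have sP: "sum l P \<le> sum l X" using sum_mono'[of P X] XR(1) Rn unfolding P_def by blast
    have wP: "inW P" unfolding inW_def using PR True sP XR by auto
    have r1: "rch l n (Suc 0) (V X) (V P)" using nest'[OF wX wP] unfolding P_def by blast
    have r2: "rch l n (Suc 0) (V P) (V Y)" using nest[OF wP wY] unfolding P_def by blast
    have "rch l n (Suc 0 + Suc 0) (V X) (V Y)" using rch_trans[OF r2 r1] .
    then show ?thesis by (rule rch_mono) simp
  next
    case F1: False
    show ?thesis
    proof (cases "sum l (X \<union> Y) < h")
      case True
      have XYR: "X \<union> Y \<subseteq> Ra" using XR YR by blast
      have "sum l X \<le> sum l (X \<union> Y)" using sum_mono'[of X "X \<union> Y"] XYR Rn by blast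
      then have wU: "inW (X \<union> Y)" unfolding inW_def using XYR True XR by auto
      have r1: "rch l n (Suc 0) (V X) (V (X \<union> Y))" using nest[OF wX wU] by blast
      have r2: "rch l n (Suc 0) (V (X \<union> Y)) (V Y)" using nest'[OF wU wY] by blast
      have "rch l n (Suc 0 + Suc 0) (V X) (V Y)" using rch_trans[OF r2 r1] .
    then show ?thesis by (rule rch_mono) simp
    next
      case F2: False
      define Y' where "Y' = Ra - Y"
      have wY': "inW Y'" using inW_compl[OF wY] unfolding Y'_def .
      have Y'Y: "Ra - Y' = Y" using YR(1) unfolding Y'_def by blast
      have sw: "rch l n 5 (V Y') (V Y)" using swap[OF conn wY'] Y'Y by simp
      show ?thesis
      proof (cases "h - l a < sum l Q")
        case True
        have sQ: "sum l Q \<le> sum l X" using sum_mono'[of Q X] XR(1) Rn unfolding Q_def by blast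
        have wQ: "inW Q" unfolding inW_def using PR True sQ XR by auto
        have r1: "rch l n (Suc 0) (V X) (V Q)" using nest'[OF wX wQ] unfolding Q_def by blast
        have r2: "rch l n (Suc 0) (V Q) (V Y')" using nest[OF wQ wY'] XR(1) unfolding Q_def Y'_def by blast
        have "rch l n (Suc 0 + Suc 0 + 5) (V X) (V Y)" using rch_trans[OF sw rch_trans[OF r2 r1]] .
        then show ?thesis by (simp add: numeral_eq_Suc)
      next
        case F3: False
        show ?thesis
        proof (cases "h - l a < sum l S")
          case True
          define Z where "Z = Ra - S"
          have ZR: "Z \<subseteq> Ra" unfolding Z_def by blast
          have sZ: "sum l Z = tot - l a - sum l S" using sum_Ra_diff[OF PR(3)] unfolding Z_def .
          have XZ: "X \<subseteq> Z" "Y' \<subseteq> Z" using XR(1) unfolding Z_def S_def Y'_def by auto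
          have "sum l X \<le> sum l Z" using sum_mono'[OF XZ(1)] ZR Rn by blast
          then have wZ: "inW Z" unfolding inW_def using ZR sZ True XR by auto
          have r1: "rch l n (Suc 0) (V X) (V Z)" using nest[OF wX wZ XZ(1)] .
          have r2: "rch l n (Suc 0) (V Z) (V Y')" using nest'[OF wZ wY' XZ(2)] .
          have "rch l n (Suc 0 + Suc 0 + 5) (V X) (V Y)" using rch_trans[OF sw rch_trans[OF r2 r1]] .
          then show ?thesis by (simp add: numeral_eq_Suc)
        next
          case F4: False
          have nP: "sum l P \<noteq> h - l a" "sum l Q \<noteq> h - l a" using gen_lo PR by auto
          have sPl: "sum l P < h - l a" "sum l Q < h - l a" using F1 F3 nP by auto
          have sY': "sum l Y' = sum l Q + sum l U"
          proof -
            have "Y' = Q \<union> U" "Q \<inter> U = {}" using XR(1) unfolding Y'_def Q_def U_def by auto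
            then show ?thesis using sum_un[of Q U] PR Rn by auto
          qed
          have sY'v: "sum l Y' = tot - l a - sum l Y" using sum_Ra_diff[OF YR(1)] unfolding Y'_def .
          have Pne: "P \<noteq> {}"
          proof
            assume e: "P = {}" then have "sum l P = 0" by simp
            then show False using sX sPl XR(2) by linarith
          qed
          have Qne: "Q \<noteq> {}"
          proof
            assume e: "Q = {}" then have "sum l Q = 0" by simp
            then show False using sX sPl XR(2) by linarith
          qed
          have Une: "U \<noteq> {}"
          proof
            assume e: "U = {}" then have "sum l U = 0" by simp
            then show False using sY' sY'v sPl YR(3) by linarith
          qed
          have g0: "gvertex l n [{a}, X, Ra - X]" using inW_gv[OF wX] unfolding V_def .
          note G0 = gv3D[OF g0]
          have gY: "gvertex l n [{a}, Y, Ra - Y]" using inW_gv[OF wY] unfolding V_def .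
          note GY = gv3D[OF gY]
          have shaQ: "short l n ({a} \<union> Q)" unfolding short_iff using sum_insa[OF PR(2)] sPl by simp
          have shP: "short l n P" using short_mono[of P X] G0(9) XR(1) Rn unfolding P_def by blast
          have shU: "short l n U" using short_mono[of U "Ra - Y"] GY(10) Rn unfolding U_def by blast
          have QP: "Q \<union> P = X" unfolding P_def Q_def by blast
          have g1: "gvertex l n [{a} \<union> Q, P, Ra - X]"
          proof (rule gv3I)
            show "{a} \<union> Q \<noteq> {}" by blast
            show "P \<noteq> {}" by (rule Pne)
            show "Ra - X \<noteq> {}" by (rule G0(3))
            show "({a} \<union> Q) \<inter> P = {}" using a_notin_Ra PR(1) unfolding P_def Q_def by blast
            show "({a} \<union> Q) \<inter> (Ra - X) = {}" using a_notin_Ra unfolding Q_def by blast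
            show "P \<inter> (Ra - X) = {}" unfolding P_def by blast
            have "({a} \<union> Q) \<union> P \<union> (Ra - X) = {a} \<union> X \<union> (Ra - X)" using QP by blast
            then show "({a} \<union> Q) \<union> P \<union> (Ra - X) = {1..n}" using G0(7) by simp
            show "short l n ({a} \<union> Q)" by (rule shaQ)
            show "short l n P" by (rule shP)
            show "short l n (Ra - X)" by (rule G0(10))
          qed
          have UY: "Y \<union> U \<union> Q = Y \<union> (Ra - Y)" using XR(1) YR(1) unfolding U_def Q_def by blast
          have g2: "gvertex l n [{a} \<union> Q, Y, U]"
          proof (rule gv3I)
            show "{a} \<union> Q \<noteq> {}" by blast
            show "Y \<noteq> {}" by (rule GY(2))
            show "U \<noteq> {}" by (rule Une)
            show "({a} \<union> Q) \<inter> Y = {}" using a_notin_Ra YR(1) unfolding Q_def by blast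
            show "({a} \<union> Q) \<inter> U = {}" using a_notin_Ra unfolding U_def Q_def by blast
            show "Y \<inter> U = {}" unfolding U_def by blast
            have "({a} \<union> Q) \<union> Y \<union> U = {a} \<union> Y \<union> (Ra - Y)" using UY by blast
            then show "({a} \<union> Q) \<union> Y \<union> U = {1..n}" using GY(7) by simp
            show "short l n ({a} \<union> Q)" by (rule shaQ)
            show "short l n Y" by (rule GY(9))
            show "short l n U" by (rule shU)
          qed
          have ga: "gvertex l n [X, Ra - X, {a}]" using gvertex_rot[OF g0, of 1] by simp
          have gb: "gvertex l n [P, Ra - X, {a} \<union> Q]" using gvertex_rot[OF g1, of 1] by simp
          have "P \<subset> X" "{a} \<subset> {a} \<union> Q" using Qne PR a_notin_Ra unfolding P_def Q_def by auto
          then have "gadj l n [X, Ra - X, {a}] [P, Ra - X, {a} \<union> Q]" using stepP[OF ga gb] by blast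
          then have e1: "gadj l n [{a}, X, Ra - X] [{a} \<union> Q, P, Ra - X]"
            using gadj_unrot[of 1 "[{a}, X, Ra - X]" 1 "[{a} \<union> Q, P, Ra - X]"] by simp
          have r2: "rch l n (Suc 0) [{a} \<union> Q, P, Ra - X] [{a} \<union> Q, Y, U]"
          proof (cases "S = {}")
            case True
            then have "P = Y" "Ra - X = U" using XR(1) YR(1) unfolding P_def S_def U_def by auto
            then show ?thesis by (simp add: rch_refl)
          next
            case False
            have gc: "gvertex l n [Ra - X, {a} \<union> Q, P]" using gvertex_rot[OF g1, of 2] by (simp add: numeral_eq_Suc)
            have gd: "gvertex l n [U, {a} \<union> Q, Y]" using gvertex_rot[OF g2, of 2] by (simp add: numeral_eq_Suc)
            have "U \<subset> Ra - X" "P \<subset> Y" using False YR(1) unfolding U_def S_def P_def by auto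
            then have "gadj l n [Ra - X, {a} \<union> Q, P] [U, {a} \<union> Q, Y]" using stepP[OF gc gd] by blast
            then have "gadj l n [{a} \<union> Q, P, Ra - X] [{a} \<union> Q, Y, U]"
              using gadj_unrot[of 2 "[{a} \<union> Q, P, Ra - X]" 2 "[{a} \<union> Q, Y, U]"] by (simp add: numeral_eq_Suc)
            then show ?thesis by (rule rch_edge)
          qed
          have UQ: "U \<union> Q = Ra - Y" using XR(1) unfolding U_def Q_def by auto
          have g3: "gvertex l n [{a}, Y, U \<union> Q]" using gY UQ by simp
          have "{a} \<subset> {a} \<union> Q" "U \<subset> U \<union> Q" using Qne PR a_notin_Ra unfolding U_def Q_def by auto
          then have e3: "gadj l n [{a} \<union> Q, Y, U] [{a}, Y, U \<union> Q]" using stepP[OF g2 g3] by blast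
          have "rch l n (Suc (Suc 0 + Suc 0)) [{a}, X, Ra - X] [{a}, Y, U \<union> Q]"
            using rch_cons[OF e1 rch_trans[OF rch_edge[OF e3] r2]] .
          then have "rch l n 3 (V X) (V Y)" unfolding V_def UQ by (simp add: numeral_eq_Suc)
          then show ?thesis by (rule rch_mono) simp
        qed
      qed
    qed
  qed
qed

lemma connected_case:
  assumes conn: "l b + l c < h" and gu: "gvertex l n u" and gv: "gvertex l n v"
  shows "path_le l n 13 u v"
proof -
  obtain X where X: "inW X" "rch l n 2 u (V X)" using iso_any[OF gu] by blast
  obtain Y where Y: "inW Y" "rch l n 2 v (V Y)" using iso_any[OF gv] by blast
  have d: "rch l n 7 (V X) (V Y)" using dist[OF conn X(1) Y(1)] .
  have "rch l n (2 + 7 + 2) u v" using rch_trans[OF rch_sym[OF Y(2)] rch_trans[OF d X(2)]] .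
  then have "rch l n 13 u v" by (rule rch_mono) simp
  then show ?thesis by (rule rch_path)
qed

end


definition "one4 p0 p1 p2 p3 \<longleftrightarrow> (p0 \<or> p1 \<or> p2 \<or> p3) \<and> \<not>(p0\<and>p1) \<and> \<not>(p0\<and>p2) \<and> \<not>(p0\<and>p3) \<and> \<not>(p1\<and>p2) \<and> \<not>(p1\<and>p3) \<and> \<not>(p2\<and>p3)"
definition "cyc4 a0 a1 a2 a3 b0 b1 b2 b3 c0 c1 c2 c3 \<longleftrightarrow>
  (a0 \<and> (b1 \<or> (b2 \<and> c3))) \<or> (a1 \<and> (b2 \<or> (b3 \<and> c0))) \<or> (a2 \<and> (b3 \<or> (b0 \<and> c1))) \<or> (a3 \<and> (b0 \<or> (b1 \<and> c2)))"
definition "sep3 x0 x1 x2 y0 y1 y2 \<longleftrightarrow> \<not>(x0\<and>y0) \<and> \<not>(x1\<and>y1) \<and> \<not>(x2\<and>y2)"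
definition "pl3 a0 a1 a2 b0 b1 b2 \<longleftrightarrow> (a0 \<and> b1) \<or> (a1 \<and> b2) \<or> (a2 \<and> b0)"

lemma o0: assumes "one4 a0 a1 a2 a3" "one4 b0 b1 b2 b3" "one4 c0 c1 c2 c3"
  "sep3 (a0\<or>a1) a2 a3 (b0\<or>b1) b2 b3" "sep3 (a0\<or>a1) a2 a3 (c0\<or>c1) c2 c3" "sep3 (b0\<or>b1) b2 b3 (c0\<or>c1) c2 c3"
  shows "pl3 (a0\<or>a1) a2 a3 (b0\<or>b1) b2 b3 \<longleftrightarrow> cyc4 a0 a1 a2 a3 b0 b1 b2 b3 c0 c1 c2 c3"
  using assms unfolding one4_def cyc4_def sep3_def pl3_def by smt
lemma o1: assumes "one4 a0 a1 a2 a3" "one4 b0 b1 b2 b3" "one4 c0 c1 c2 c3"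
  "sep3 a0 (a1\<or>a2) a3 b0 (b1\<or>b2) b3" "sep3 a0 (a1\<or>a2) a3 c0 (c1\<or>c2) c3" "sep3 b0 (b1\<or>b2) b3 c0 (c1\<or>c2) c3"
  shows "pl3 a0 (a1\<or>a2) a3 b0 (b1\<or>b2) b3 \<longleftrightarrow> cyc4 a0 a1 a2 a3 b0 b1 b2 b3 c0 c1 c2 c3"
  using assms unfolding one4_def cyc4_def sep3_def pl3_def by smt
lemma o2: assumes "one4 a0 a1 a2 a3" "one4 b0 b1 b2 b3" "one4 c0 c1 c2 c3"
  "sep3 a0 a1 (a2\<or>a3) b0 b1 (b2\<or>b3)" "sep3 a0 a1 (a2\<or>a3) c0 c1 (c2\<or>c3)" "sep3 b0 b1 (b2\<or>b3) c0 c1 (c2\<or>c3)"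
  shows "pl3 a0 a1 (a2\<or>a3) b0 b1 (b2\<or>b3) \<longleftrightarrow> cyc4 a0 a1 a2 a3 b0 b1 b2 b3 c0 c1 c2 c3"
  using assms unfolding one4_def cyc4_def sep3_def pl3_def by smt
lemma o3: assumes "one4 a0 a1 a2 a3" "one4 b0 b1 b2 b3" "one4 c0 c1 c2 c3"
  "sep3 (a3\<or>a0) a1 a2 (b3\<or>b0) b1 b2" "sep3 (a3\<or>a0) a1 a2 (c3\<or>c0) c1 c2" "sep3 (b3\<or>b0) b1 b2 (c3\<or>c0) c1 c2"
  shows "pl3 (a3\<or>a0) a1 a2 (b3\<or>b0) b1 b2 \<longleftrightarrow> cyc4 a0 a1 a2 a3 b0 b1 b2 b3 c0 c1 c2 c3"
  using assms unfolding one4_def cyc4_def sep3_def pl3_def by smt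

context L9 begin

definition orp where "orp xs \<longleftrightarrow> (a \<in> xs!0 \<and> b \<in> xs!1) \<or> (a \<in> xs!1 \<and> b \<in> xs!2) \<or> (a \<in> xs!2 \<and> b \<in> xs!0)"

lemma plus3: "orp [X,Y,Z] \<longleftrightarrow> pl3 (a\<in>X) (a\<in>Y) (a\<in>Z) (b\<in>X) (b\<in>Y) (b\<in>Z)"
  unfolding orp_def pl3_def by (simp add: numeral_eq_Suc)

lemma plus_rot: "orp (rotate k [X,Y,Z]) = orp [X,Y,Z]"
proof -
  have "rotate k [X,Y,Z] = [X,Y,Z] \<or> rotate k [X,Y,Z] = [Y,Z,X] \<or> rotate k [X,Y,Z] = [Z,X,Y]" by (rule rot3)
  moreover have e1: "orp [Y,Z,X] = orp [X,Y,Z]" unfolding plus3 pl3_def by blast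
  moreover have e2: "orp [Z,X,Y] = orp [X,Y,Z]" unfolding plus3 pl3_def by blast
  ultimately show ?thesis by (elim disjE) (simp only:)+
qed

lemma plus_cyc: assumes "cyc_eq xs ys" "length xs = 3" shows "orp xs = orp ys"
proof -
  obtain X Y Z where xs: "xs = [X,Y,Z]" using assms(2) by (auto simp: length_Suc_conv numeral_eq_Suc)
  obtain k where "ys = rotate k xs" using assms(1) unfolding cyc_eq_def by blast
  then show ?thesis using plus_rot xs by simp
qed

lemma two_long:
  assumes dc: "h < l b + l c" and J: "J \<subseteq> {1..n}" "x \<in> J" "y \<in> J" "x \<noteq> y" "x \<in> {a,b,c}" "y \<in> {a,b,c}"
  shows "\<not> short l n J"
proof -
  have xy: "h < l x + l y" using J(4,5,6) dc lab lbc by auto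
  have "sum l {x,y} \<le> sum l J" using sum_mono'[of "{x,y}" J] J by blast
  then have "l x + l y \<le> sum l J" using J(4) by simp
  then show ?thesis unfolding short_iff using xy by linarith
qed

lemma sep_gv: assumes dc: "h < l b + l c" and g: "gvertex l n [X,Y,Z]" and xy: "x \<noteq> y" "x \<in> {a,b,c}" "y \<in> {a,b,c}"
  shows "sep3 (x\<in>X) (x\<in>Y) (x\<in>Z) (y\<in>X) (y\<in>Y) (y\<in>Z)"
proof -
  note G = gv3D[OF g]
  have s: "X \<subseteq> {1..n}" "Y \<subseteq> {1..n}" "Z \<subseteq> {1..n}" using G(7) by blast+
  have 1: "\<not> (x\<in>X \<and> y\<in>X)"
  proof
    assume "x\<in>X \<and> y\<in>X" then have "\<not> short l n X" using two_long[OF dc s(1) _ _ xy] by blast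
    then show False using G(8) by blast
  qed
  have 2: "\<not> (x\<in>Y \<and> y\<in>Y)"
  proof
    assume "x\<in>Y \<and> y\<in>Y" then have "\<not> short l n Y" using two_long[OF dc s(2) _ _ xy] by blast
    then show False using G(9) by blast
  qed
  have 3: "\<not> (x\<in>Z \<and> y\<in>Z)"
  proof
    assume "x\<in>Z \<and> y\<in>Z" then have "\<not> short l n Z" using two_long[OF dc s(3) _ _ xy] by blast
    then show False using G(10) by blast
  qed
  show ?thesis unfolding sep3_def using 1 2 3 by blast
qed

lemma one_adm: assumes ad: "admissible l n [E0,E1,E2,E3]" and x: "x \<in> {1..n}"
  shows "one4 (x\<in>E0) (x\<in>E1) (x\<in>E2) (x\<in>E3)"
proof -
  have A: "E0\<inter>E1={}" "E0\<inter>E2={}" "E0\<inter>E3={}" "E1\<inter>E2={}" "E1\<inter>E3={}" "E2\<inter>E3={}"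
    "E0\<union>E1\<union>E2\<union>E3={1..n}" using ad unfolding adm4 by simp_all
  have u: "x \<in> E0 \<union> E1 \<union> E2 \<union> E3" using A(7) x by simp
  show ?thesis unfolding one4_def
  proof (intro conjI)
    show "x \<in> E0 \<or> x \<in> E1 \<or> x \<in> E2 \<or> x \<in> E3" using u by blast
    show "\<not> (x \<in> E0 \<and> x \<in> E1)" using A(1) by blast
    show "\<not> (x \<in> E0 \<and> x \<in> E2)" using A(2) by blast
    show "\<not> (x \<in> E0 \<and> x \<in> E3)" using A(3) by blast
    show "\<not> (x \<in> E1 \<and> x \<in> E2)" using A(4) by blast
    show "\<not> (x \<in> E1 \<and> x \<in> E3)" using A(5) by blast
    show "\<not> (x \<in> E2 \<and> x \<in> E3)" using A(6) by blast
  qed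
qed

definition cyce where "cyce e \<longleftrightarrow> cyc4 (a\<in>e!0) (a\<in>e!1) (a\<in>e!2) (a\<in>e!3) (b\<in>e!0) (b\<in>e!1) (b\<in>e!2) (b\<in>e!3)
   (c\<in>e!0) (c\<in>e!1) (c\<in>e!2) (c\<in>e!3)"

lemma orient:
  assumes dc: "h < l b + l c" and adm: "admissible l n [E0,E1,E2,E3]" and i: "i < 4"
    and g: "gvertex l n (merge4 [E0,E1,E2,E3] i)"
  shows "orp (merge4 [E0,E1,E2,E3] i) = cyce [E0,E1,E2,E3]"
proof -
  have oa: "one4 (a\<in>E0) (a\<in>E1) (a\<in>E2) (a\<in>E3)" using one_adm[OF adm ain] .
  have ob: "one4 (b\<in>E0) (b\<in>E1) (b\<in>E2) (b\<in>E3)" using one_adm[OF adm bin] .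
  have oc: "one4 (c\<in>E0) (c\<in>E1) (c\<in>E2) (c\<in>E3)" using one_adm[OF adm cin] .
  have ce: "cyce [E0,E1,E2,E3] = cyc4 (a\<in>E0) (a\<in>E1) (a\<in>E2) (a\<in>E3) (b\<in>E0) (b\<in>E1) (b\<in>E2) (b\<in>E3)
   (c\<in>E0) (c\<in>E1) (c\<in>E2) (c\<in>E3)" unfolding cyce_def by (simp add: numeral_eq_Suc)
  have "i = 0 \<or> i = 1 \<or> i = 2 \<or> i = 3" using i by arith
  then show ?thesis
  proof (elim disjE)
    assume i0: "i = 0"
    have g': "gvertex l n [E0 \<union> E1, E2, E3]" using g unfolding i0 m4 .
    have s1: "sep3 (a\<in>E0 \<or> a\<in>E1) (a\<in>E2) (a\<in>E3) (b\<in>E0 \<or> b\<in>E1) (b\<in>E2) (b\<in>E3)"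
      using sep_gv[OF dc g', of a b] ab by simp
    have s2: "sep3 (a\<in>E0 \<or> a\<in>E1) (a\<in>E2) (a\<in>E3) (c\<in>E0 \<or> c\<in>E1) (c\<in>E2) (c\<in>E3)"
      using sep_gv[OF dc g', of a c] ac by simp
    have s3: "sep3 (b\<in>E0 \<or> b\<in>E1) (b\<in>E2) (b\<in>E3) (c\<in>E0 \<or> c\<in>E1) (c\<in>E2) (c\<in>E3)"
      using sep_gv[OF dc g', of b c] bc by simp
    show ?thesis unfolding i0 m4 plus3 ce using o0[OF oa ob oc s1 s2 s3] by simp
  next
    assume i0: "i = 1"
    have g': "gvertex l n [E0, E1 \<union> E2, E3]" using g unfolding i0 m4 .
    have s1: "sep3 (a\<in>E0) (a\<in>E1 \<or> a\<in>E2) (a\<in>E3) (b\<in>E0) (b\<in>E1 \<or> b\<in>E2) (b\<in>E3)"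
      using sep_gv[OF dc g', of a b] ab by simp
    have s2: "sep3 (a\<in>E0) (a\<in>E1 \<or> a\<in>E2) (a\<in>E3) (c\<in>E0) (c\<in>E1 \<or> c\<in>E2) (c\<in>E3)"
      using sep_gv[OF dc g', of a c] ac by simp
    have s3: "sep3 (b\<in>E0) (b\<in>E1 \<or> b\<in>E2) (b\<in>E3) (c\<in>E0) (c\<in>E1 \<or> c\<in>E2) (c\<in>E3)"
      using sep_gv[OF dc g', of b c] bc by simp
    show ?thesis unfolding i0 m4 plus3 ce using o1[OF oa ob oc s1 s2 s3] by simp
  next
    assume i0: "i = 2"
    have g': "gvertex l n [E0, E1, E2 \<union> E3]" using g unfolding i0 m4 .
    have s1: "sep3 (a\<in>E0) (a\<in>E1) (a\<in>E2 \<or> a\<in>E3) (b\<in>E0) (b\<in>E1) (b\<in>E2 \<or> b\<in>E3)"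
      using sep_gv[OF dc g', of a b] ab by simp
    have s2: "sep3 (a\<in>E0) (a\<in>E1) (a\<in>E2 \<or> a\<in>E3) (c\<in>E0) (c\<in>E1) (c\<in>E2 \<or> c\<in>E3)"
      using sep_gv[OF dc g', of a c] ac by simp
    have s3: "sep3 (b\<in>E0) (b\<in>E1) (b\<in>E2 \<or> b\<in>E3) (c\<in>E0) (c\<in>E1) (c\<in>E2 \<or> c\<in>E3)"
      using sep_gv[OF dc g', of b c] bc by simp
    show ?thesis unfolding i0 m4 plus3 ce using o2[OF oa ob oc s1 s2 s3] by simp
  next
    assume i0: "i = 3"
    have g': "gvertex l n [E3 \<union> E0, E1, E2]" using g unfolding i0 m4 .
    have s1: "sep3 (a\<in>E3 \<or> a\<in>E0) (a\<in>E1) (a\<in>E2) (b\<in>E3 \<or> b\<in>E0) (b\<in>E1) (b\<in>E2)"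
      using sep_gv[OF dc g', of a b] ab by simp
    have s2: "sep3 (a\<in>E3 \<or> a\<in>E0) (a\<in>E1) (a\<in>E2) (c\<in>E3 \<or> c\<in>E0) (c\<in>E1) (c\<in>E2)"
      using sep_gv[OF dc g', of a c] ac by simp
    have s3: "sep3 (b\<in>E3 \<or> b\<in>E0) (b\<in>E1) (b\<in>E2) (c\<in>E3 \<or> c\<in>E0) (c\<in>E1) (c\<in>E2)"
      using sep_gv[OF dc g', of b c] bc by simp
    show ?thesis unfolding i0 m4 plus3 ce using o3[OF oa ob oc s1 s2 s3] by simp
  qed
qed

lemma len_merge: "length (merge4 e i) = 3"
  unfolding merge4_def by (simp split: nat.split)

lemma gadj_plus: assumes dc: "h < l b + l c" and g: "gadj l n u v" shows "orp u = orp v"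
proof -
  obtain e i j where e: "admissible l n e" "length e = 4" "i < 4" "j < 4"
    "cyc_eq (merge4 e i) u" "cyc_eq (merge4 e j) v" and gu: "gvertex l n u" and gv: "gvertex l n v"
    using g unfolding gadj_def by blast
  obtain E0 E1 E2 E3 where E: "e = [E0,E1,E2,E3]" using e(2) by (auto simp: length_Suc_conv numeral_eq_Suc)
  have gi: "gvertex l n (merge4 e i)" using gvertex_cyc[OF gu cyc_eq_sym[OF e(5)]] .
  have gj: "gvertex l n (merge4 e j)" using gvertex_cyc[OF gv cyc_eq_sym[OF e(6)]] .
  have "orp u = orp (merge4 e i)" using plus_cyc[OF e(5) len_merge] by simp
  also have "\<dots> = cyce e" unfolding E by (rule orient[OF dc e(1)[unfolded E] e(3) gi[unfolded E]])
  also have "\<dots> = orp (merge4 e j)" unfolding E by (rule orient[OF dc e(1)[unfolded E] e(4) gj[unfolded E], symmetric])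
  also have "\<dots> = orp v" using plus_cyc[OF e(6) len_merge] .
  finally show ?thesis .
qed

end


context L9 begin

lemma hub:
  assumes g: "gvertex l n [A,B,C]" and aA: "a \<in> A" and xB: "x \<in> B" and big: "h < l a + l x"
  shows "rch l n 2 [A,B,C] [{a},{x},{1..n} - {a,x}]"
proof -
  note G = gv3D[OF g]
  have sub: "A \<subseteq> {1..n}" "B \<subseteq> {1..n}" "C \<subseteq> {1..n}" using G(7) by blast+
  have ps: "sum l A + sum l B + sum l C = tot" using part_sum[OF g] .
  define A' where "A' = A - {a}"
  have A'R: "A' \<subseteq> Ra" using sub(1) unfolding A'_def Ra_def by blast
  have AA: "A = insert a A'" using aA unfolding A'_def by blast
  have sA: "sum l A = l a + sum l A'" using sum_insa[OF A'R] AA by simp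
  have xn: "x \<in> {1..n}" using xB sub(2) by blast
  have xa: "x \<noteq> a" using xB aA G(4) by blast
  have sxB: "l x \<le> sum l B" using sum_mono'[of "{x}" B] xB sub(2) by simp
  have A'C: "A' \<inter> C = {}" "A' \<inter> B = {}" using G(4) G(5) unfolding A'_def by blast+
  have sCA: "sum l (C \<union> A') = sum l C + sum l A'" using sum_un[of C A'] sub(3) A'R Ra_sub A'C by blast
  have gw1: "gvertex l n [{a}, B, C \<union> A']"
  proof (rule gv3I)
    show "{a} \<noteq> {}" "B \<noteq> {}" "C \<union> A' \<noteq> {}" using G(2) G(3) by auto
    show "{a} \<inter> B = {}" "{a} \<inter> (C \<union> A') = {}" "B \<inter> (C \<union> A') = {}"
      using aA G(4) G(5) G(6) A'C unfolding A'_def by auto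
    show "{a} \<union> B \<union> (C \<union> A') = {1..n}" using G(7) AA by auto
    show "short l n {a}" unfolding short_iff using h_pos by simp
    show "short l n B" using G(9) .
    show "short l n (C \<union> A')" unfolding short_iff using sCA ps sA sxB big by linarith
  qed
  have r1: "rch l n (Suc 0) [A,B,C] [{a}, B, C \<union> A']"
  proof (cases "A' = {}")
    case True then have "A = {a}" using AA by simp
    then show ?thesis using True by (simp add: rch_refl)
  next
    case False
    have aA': "a \<notin> A'" unfolding A'_def by blast
    have "{a} \<subset> A" "C \<subset> C \<union> A'" using False AA A'C aA' by auto
    then show ?thesis using stepP[OF g gw1] rch_edge by blast
  qed
  have eqR: "C \<union> A' \<union> (B - {x}) = {1..n} - {a,x}"
    using G(4) G(5) G(6) G(7) aA xB unfolding A'_def by auto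
  have sR: "sum l ({1..n} - {a,x}) = tot - l a - l x"
    using sum_compl[of "{a,x}"] ain xn xa by simp
  have gw2: "gvertex l n [{a}, {x}, {1..n} - {a,x}]"
  proof (rule gv3I)
    show "{a} \<noteq> {}" "{x} \<noteq> {}" by auto
    show "{1..n} - {a,x} \<noteq> {}" using eqR G(3) by auto
    show "{a} \<inter> {x} = {}" "{a} \<inter> ({1..n} - {a,x}) = {}" "{x} \<inter> ({1..n} - {a,x}) = {}" using xa by auto
    show "{a} \<union> {x} \<union> ({1..n} - {a,x}) = {1..n}" using ain xn by auto
    show "short l n {a}" unfolding short_iff using h_pos by simp
    show "short l n {x}" unfolding short_iff using single_short[OF xn] by simp
    show "short l n ({1..n} - {a,x})" unfolding short_iff using sR big by linarith
  qed
  have r2: "rch l n (Suc 0) [{a}, B, C \<union> A'] [{a}, {x}, {1..n} - {a,x}]"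
  proof (cases "B = {x}")
    case True
    then have "C \<union> A' = {1..n} - {a,x}" using eqR by simp
    then show ?thesis using True by (simp add: rch_refl)
  next
    case False
    have ga: "gvertex l n [B, C \<union> A', {a}]" using gvertex_rot[OF gw1, of 1] by simp
    have gb: "gvertex l n [{x}, {1..n} - {a,x}, {a}]" using gvertex_rot[OF gw2, of 1] by simp
    have "{x} \<subset> B" "C \<union> A' \<subset> {1..n} - {a,x}" using False xB eqR G(6) A'C by auto
    then have "gadj l n [B, C \<union> A', {a}] [{x}, {1..n} - {a,x}, {a}]" using stepN[OF ga gb] by blast
    then have "gadj l n [{a}, B, C \<union> A'] [{a}, {x}, {1..n} - {a,x}]"
      using gadj_unrot[of 1 "[{a}, B, C \<union> A']" 1 "[{a}, {x}, {1..n} - {a,x}]"] by simp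
    then show ?thesis by (rule rch_edge)
  qed
  have "rch l n (Suc 0 + Suc 0) [A,B,C] [{a}, {x}, {1..n} - {a,x}]" using rch_trans[OF r2 r1] .
  then show ?thesis by (simp add: numeral_2_eq_2)
qed

abbreviation "Hp \<equiv> [{a},{b},{1..n} - {a,b}]"
abbreviation "Hm \<equiv> [{a},{c},{1..n} - {a,c}]"

lemma classify0:
  assumes dc: "h < l b + l c" and g: "gvertex l n [A,B,C]" and aA: "a \<in> A"
  shows "(orp [A,B,C] \<and> rch l n 2 [A,B,C] Hp) \<or> (\<not> orp [A,B,C] \<and> rch l n 2 [A,B,C] Hm)"
proof -
  note G = gv3D[OF g]
  have sub: "A \<subseteq> {1..n}" "B \<subseteq> {1..n}" "C \<subseteq> {1..n}" using G(7) by blast+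
  have bA: "b \<notin> A"
  proof
    assume "b \<in> A" then have "\<not> short l n A" using two_long[OF dc sub(1) aA _ ab] by simp
    then show False using G(8) by blast
  qed
  have bBC: "b \<in> B \<or> b \<in> C" using bin G(7) bA by blast
  show ?thesis
  proof (cases "b \<in> B")
    case True
    have "orp [A,B,C]" unfolding plus3 pl3_def using aA True by blast
    moreover have "h < l a + l b" using dc lbc lab by linarith
    then have "rch l n 2 [A,B,C] Hp" using hub[OF g aA True] by blast
    ultimately show ?thesis by blast
  next
    case False
    then have bC: "b \<in> C" using bBC by blast
    have cA: "c \<notin> A"
    proof
      assume "c \<in> A" then have "\<not> short l n A" using two_long[OF dc sub(1) aA _ ac] by simp
      then show False using G(8) by blast
    qed
    have cC: "c \<notin> C"
    proof
      assume "c \<in> C" then have "\<not> short l n C" using two_long[OF dc sub(3) bC _ bc] by simp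
      then show False using G(10) by blast
    qed
    have cB: "c \<in> B" using cin G(7) cA cC by blast
    have "\<not> orp [A,B,C]" unfolding plus3 pl3_def using aA bC G(4) G(5) G(6) by blast
    moreover have "h < l a + l c" using dc lab by linarith
    then have "rch l n 2 [A,B,C] Hm" using hub[OF g aA cB] by blast
    ultimately show ?thesis by blast
  qed
qed

lemma classify:
  assumes dc: "h < l b + l c" and g: "gvertex l n u"
  shows "(orp u \<and> rch l n 2 u Hp) \<or> (\<not> orp u \<and> rch l n 2 u Hm)"
proof -
  obtain U0 U1 U2 where u: "u = [U0,U1,U2]" using gvertex_shape[OF g] by blast
  have G: "U0 \<union> U1 \<union> U2 = {1..n}" using gv3D(7) g u by blast
  have "a \<in> U0 \<or> a \<in> U1 \<or> a \<in> U2" using G ain by blast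
  moreover
  { assume "a \<in> U0" then have ?thesis using classify0[OF dc] g u by blast }
  moreover
  { assume aU: "a \<in> U1"
    have r: "rotate 1 u = [U1,U2,U0]" using u by simp
    have g': "gvertex l n [U1,U2,U0]" using gvertex_rot[OF g, of 1] r by simp
    have cy: "cyc_eq [U1,U2,U0] u" using cyc_eq_sym[OF cyc_eq_rot[of u 1]] r by simp
    have po: "orp [U1,U2,U0] = orp u" using plus_cyc[OF cy] by simp
    have ?thesis using classify0[OF dc g' aU] po rch_cycl[OF _ cy] by blast }
  moreover
  { assume aU: "a \<in> U2"
    have r: "rotate 2 u = [U2,U0,U1]" using u by (simp add: numeral_eq_Suc)
    have g': "gvertex l n [U2,U0,U1]" using gvertex_rot[OF g, of 2] r by simp
    have cy: "cyc_eq [U2,U0,U1] u" using cyc_eq_sym[OF cyc_eq_rot[of u 2]] r by simp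
    have po: "orp [U2,U0,U1] = orp u" using plus_cyc[OF cy] by simp
    have ?thesis using classify0[OF dc g' aU] po rch_cycl[OF _ cy] by blast }
  ultimately show ?thesis by blast
qed

lemma gv_len: "gvertex l n u \<Longrightarrow> length u = 3" unfolding gvertex_def by simp

lemma path_orp:
  assumes dc: "h < l b + l c" and p: "path_le l n k u v" and g: "gvertex l n u"
  shows "orp u = orp v"
proof -
  obtain ps where ps: "ps \<noteq> []" "cyc_eq (ps ! 0) u" "cyc_eq (ps ! (length ps - 1)) v"
    "\<forall>i. i + 1 < length ps \<longrightarrow> gadj l n (ps ! i) (ps ! (i + 1))"
    using p unfolding path_le_def by blast
  have g0: "gvertex l n (ps ! 0)" using gvertex_cyc[OF g cyc_eq_sym[OF ps(2)]] .
  have inv: "i < length ps \<Longrightarrow> gvertex l n (ps ! i) \<and> orp (ps ! i) = orp (ps ! 0)" for i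
  proof (induction i)
    case 0 then show ?case using g0 by simp
  next
    case (Suc i)
    then have ga: "gadj l n (ps ! i) (ps ! (i + 1))" using ps(4) by simp
    have "gvertex l n (ps ! Suc i)" using ga unfolding gadj_def by simp
    moreover have "orp (ps ! i) = orp (ps ! Suc i)" using gadj_plus[OF dc ga] by simp
    ultimately show ?case using Suc by simp
  qed
  have L: "length ps - 1 < length ps" using ps(1) by simp
  have gl: "gvertex l n (ps ! (length ps - 1))" "orp (ps ! (length ps - 1)) = orp (ps ! 0)" using inv[OF L] by auto
  have "orp (ps ! 0) = orp u" using plus_cyc[OF ps(2) gv_len[OF g0]] .
  moreover have "orp (ps ! (length ps - 1)) = orp v" using plus_cyc[OF ps(3) gv_len[OF gl(1)]] .
  ultimately show ?thesis using gl(2) by simp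
qed

lemma disconnected_case:
  assumes dc: "h < l b + l c" and gu: "gvertex l n u" and gv: "gvertex l n v" and sc: "same_component l n u v"
  shows "path_le l n 7 u v"
proof -
  obtain k where "path_le l n k u v" using sc unfolding same_component_def by blast
  then have eq: "orp u = orp v" using path_orp[OF dc _ gu] by blast
  have cu: "(orp u \<and> rch l n 2 u Hp) \<or> (\<not> orp u \<and> rch l n 2 u Hm)" using classify[OF dc gu] .
  have cv: "(orp v \<and> rch l n 2 v Hp) \<or> (\<not> orp v \<and> rch l n 2 v Hm)" using classify[OF dc gv] .
  have "\<exists>H. rch l n 2 u H \<and> rch l n 2 v H" using cu cv eq by blast
  then obtain H where H: "rch l n 2 u H" "rch l n 2 v H" by blast
  have "rch l n (2 + 2) u v" using rch_trans[OF rch_sym[OF H(2)] H(1)] .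
  then have "rch l n 7 u v" by (rule rch_mono) simp
  then show ?thesis by (rule rch_path)
qed

end

theorem mainTheorem9:
  fixes l :: "nat \<Rightarrow> real" and n a b c :: nat
  assumes "n \<ge> 4"
    and "length_vector l n" and "strict_triangle l n" and "generic l n"
    and "a \<in> {1..n}" and "b \<in> {1..n}" and "c \<in> {1..n}"
    and "a \<noteq> b" and "a \<noteq> c" and "b \<noteq> c"
    and "l a \<ge> l b" and "l b \<ge> l c"
    and "\<forall>i\<in>{1..n} - {a, b, c}. l i \<le> l c"
  shows "(l b + l c < total_len l n / 2 \<longrightarrow>
            (\<forall>u v. gvertex l n u \<and> gvertex l n v \<longrightarrow> path_le l n 13 u v))
       \<and> (l b + l c > total_len l n / 2 \<longrightarrow>
            (\<forall>u v. gvertex l n u \<and> gvertex l n v \<and> same_component l n u v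
                 \<longrightarrow> path_le l n 7 u v))"
proof -
  have "L9 l n a b c" unfolding L9_def using assms by blast
  then interpret L9 l n a b c .
  show ?thesis
  proof (intro conjI impI allI)
    fix u v
    assume "l b + l c < total_len l n / 2" "gvertex l n u \<and> gvertex l n v"
    then show "path_le l n 13 u v" using connected_case by blast
  next
    fix u v
    assume "l b + l c > total_len l n / 2" "gvertex l n u \<and> gvertex l n v \<and> same_component l n u v"
    then show "path_le l n 7 u v" using disconnected_case by blast
  qed
qed


end
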